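(* Let $w\in W$ and $n_1,\ldots,n_r\in\mathbb Z_{\ge0}$ with $\sum n_j=\ell(w)$. There exists a labeled sorting process of $w$ whose labels have multiplicities $n_1,\ldots,n_r$ (i.e. $\alpha_j$ occurs exactly $n_j$ times as a label) if and only if $|R_I(w)|\ge\sum_{i\in I}n_i$ for every $I\subseteq\{1,\ldots,r\}$. Moreover, in this case such a labeled sorting process exists which is antireduced, i.e. for every $i$ one has $w_{i-1}^{-1}\beta_i\in-\Pi$, where $w_{i}=\sigma_{\beta_i}\cdots\sigma_{\beta_1}w$.
   Context: Setting: simply laced root system $\Phi$ of rank $r$, positive roots $\Phi^+$, $\Phi^-=-\Phi^+$, simple roots $\Pi=\{\alpha_1,\ldots,\alpha_r\}$, Weyl group $W$ with length $\ell$, reflections $\sigma_\alpha$. $\mathrm{supp}\,v$ is the set of simple roots with nonzero coefficient in $v$. For $I\subseteq\{1,\ldots,r\}$, $R_I(w)$ is the set of $\alpha\in\Phi^+\cap w\Phi^-$ whose support contains some $\alpha_i$, $i\in I$. A sorting process of $w$ (with $N=\ell(w)$) is a sequence of positive roots $\beta_1,\ldots,\beta_N$ with $w=\sigma_{\beta_1}\cdots\sigma_{\beta_N}$ and $\ell(\sigma_{\beta_i}\cdots\sigma_{\beta_1}w)=N-i$ for all $0\le i\le N$. A labeled sorting process is a sorting process together with labels $f(k)\in\mathrm{supp}\,\beta_k$, $k=1,\ldots,N$ (each label a simple root). *)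

theory Defs
  imports "HOL-Analysis.Analysis"
begin

definition refl :: "'a::euclidean_space \<Rightarrow> 'a \<Rightarrow> 'a" where
  "refl a v = v - ((2 * (v \<bullet> a)) / (a \<bullet> a)) *\<^sub>R a"

definition coord :: "nat \<Rightarrow> (nat \<Rightarrow> 'a::euclidean_space) \<Rightarrow> nat \<Rightarrow> 'a \<Rightarrow> real" where
  "coord r alpha i v = (SOME c. v = (\<Sum>j=1..r. c j *\<^sub>R alpha j)) i"

definition supp :: "nat \<Rightarrow> (nat \<Rightarrow> 'a::euclidean_space) \<Rightarrow> 'a \<Rightarrow> nat set" where
  "supp r alpha v = {i \<in> {1..r}. coord r alpha i v \<noteq> 0}"

definition simply_laced_root_system ::
  "'a::euclidean_space set \<Rightarrow> nat \<Rightarrow> (nat \<Rightarrow> 'a) \<Rightarrow> bool" where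
  "simply_laced_root_system Phi r alpha \<longleftrightarrow>
     finite Phi \<and> 0 \<notin> Phi \<and>
     (\<forall>a\<in>Phi. \<forall>b\<in>Phi. refl a b \<in> Phi) \<and>
     (\<forall>a\<in>Phi. \<forall>c::real. c *\<^sub>R a \<in> Phi \<longrightarrow> c = 1 \<or> c = -1) \<and>
     (\<forall>a\<in>Phi. \<forall>b\<in>Phi. (2 * (b \<bullet> a)) / (a \<bullet> a) \<in> \<int>) \<and>
     (\<forall>a\<in>Phi. \<forall>b\<in>Phi. norm a = norm b) \<and>
     inj_on alpha {1..r} \<and> alpha ` {1..r} \<subseteq> Phi \<and>
     independent (alpha ` {1..r}) \<and>
     (\<forall>b\<in>Phi. \<exists>c::nat \<Rightarrow> int. b = (\<Sum>j=1..r. of_int (c j) *\<^sub>R alpha j) \<and>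
        ((\<forall>j\<in>{1..r}. c j \<ge> 0) \<or> (\<forall>j\<in>{1..r}. c j \<le> 0)))"

definition pos_roots :: "'a::euclidean_space set \<Rightarrow> nat \<Rightarrow> (nat \<Rightarrow> 'a) \<Rightarrow> 'a set" where
  "pos_roots Phi r alpha = {b \<in> Phi. \<forall>i\<in>{1..r}. coord r alpha i b \<ge> 0}"

definition neg_roots :: "'a::euclidean_space set \<Rightarrow> nat \<Rightarrow> (nat \<Rightarrow> 'a) \<Rightarrow> 'a set" where
  "neg_roots Phi r alpha = uminus ` pos_roots Phi r alpha"

inductive_set weyl_group :: "'a::euclidean_space set \<Rightarrow> ('a \<Rightarrow> 'a) set" for Phi where
  id_in: "id \<in> weyl_group Phi"
| refl_in: "a \<in> Phi \<Longrightarrow> w \<in> weyl_group Phi \<Longrightarrow> refl a \<circ> w \<in> weyl_group Phi"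

definition refl_prod :: "'a::euclidean_space list \<Rightarrow> 'a \<Rightarrow> 'a" where
  "refl_prod bs = foldr (\<lambda>b f. refl b \<circ> f) bs id"

definition wlen :: "nat \<Rightarrow> (nat \<Rightarrow> 'a::euclidean_space) \<Rightarrow> ('a \<Rightarrow> 'a) \<Rightarrow> nat" where
  "wlen r alpha w = (LEAST k. \<exists>is. length is = k \<and> set is \<subseteq> {1..r} \<and>
                                    w = refl_prod (map alpha is))"

definition R_set :: "'a::euclidean_space set \<Rightarrow> nat \<Rightarrow> (nat \<Rightarrow> 'a) \<Rightarrow> nat set \<Rightarrow> ('a \<Rightarrow> 'a) \<Rightarrow> 'a set" where
  "R_set Phi r alpha I w = {b \<in> pos_roots Phi r alpha \<inter> w ` neg_roots Phi r alpha.
                               \<exists>i\<in>I. i \<in> supp r alpha b}"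

definition partial_w :: "'a::euclidean_space list \<Rightarrow> ('a \<Rightarrow> 'a) \<Rightarrow> nat \<Rightarrow> 'a \<Rightarrow> 'a" where
  "partial_w bs w i = refl_prod (rev (take i bs)) \<circ> w"

definition sorting_process ::
  "'a::euclidean_space set \<Rightarrow> nat \<Rightarrow> (nat \<Rightarrow> 'a) \<Rightarrow> ('a \<Rightarrow> 'a) \<Rightarrow> 'a list \<Rightarrow> bool" where
  "sorting_process Phi r alpha w bs \<longleftrightarrow>
     length bs = wlen r alpha w \<and>
     set bs \<subseteq> pos_roots Phi r alpha \<and>
     w = refl_prod bs \<and>
     (\<forall>i\<le>length bs. wlen r alpha (partial_w bs w i) = length bs - i)"

text \<open>Labels ls ! (k-1) is the label f(k) of beta_k = bs ! (k-1), given as the index of a simple root.\<close>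
definition labeled_sorting_process ::
  "'a::euclidean_space set \<Rightarrow> nat \<Rightarrow> (nat \<Rightarrow> 'a) \<Rightarrow> ('a \<Rightarrow> 'a) \<Rightarrow> 'a list \<Rightarrow> nat list \<Rightarrow> bool" where
  "labeled_sorting_process Phi r alpha w bs ls \<longleftrightarrow>
     sorting_process Phi r alpha w bs \<and> length ls = length bs \<and>
     (\<forall>k<length bs. ls ! k \<in> supp r alpha (bs ! k))"

definition label_mult :: "nat list \<Rightarrow> nat \<Rightarrow> nat" where
  "label_mult ls j = length (filter (\<lambda>x. x = j) ls)"

definition antireduced ::
  "nat \<Rightarrow> (nat \<Rightarrow> 'a::euclidean_space) \<Rightarrow> ('a \<Rightarrow> 'a) \<Rightarrow> 'a list \<Rightarrow> bool" where
  "antireduced r alpha w bs \<longleftrightarrow>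
     (\<forall>k<length bs. inv (partial_w bs w k) (bs ! k) \<in> uminus ` alpha ` {1..r})"

end

theory Submission imports Defs begin

locale RS =
  fixes Phi :: "'a::euclidean_space set" and r :: nat and alpha :: "nat \<Rightarrow> 'a"
  assumes RS: "simply_laced_root_system Phi r alpha"
begin

lemma fin: "finite Phi" and zero: "0 \<notin> Phi"
  and reflc: "a\<in>Phi \<Longrightarrow> b\<in>Phi \<Longrightarrow> refl a b \<in> Phi"
  and reduced: "a\<in>Phi \<Longrightarrow> c *\<^sub>R a \<in> Phi \<Longrightarrow> c = 1 \<or> c = -1"
  and injA: "inj_on alpha {1..r}" and alphaPhi: "i\<in>{1..r} \<Longrightarrow> alpha i \<in> Phi"
  and indep: "independent (alpha ` {1..r})"
  and intcomb: "b \<in> Phi \<Longrightarrow> \<exists>c::nat \<Rightarrow> int. b = (\<Sum>j=1..r. of_int (c j) *\<^sub>R alpha j) \<and>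
        ((\<forall>j\<in>{1..r}. c j \<ge> 0) \<or> (\<forall>j\<in>{1..r}. c j \<le> 0))"
  using RS unfolding simply_laced_root_system_def by auto

definition lc :: "(nat \<Rightarrow> real) \<Rightarrow> 'a" where
  "lc c = (\<Sum>j=1..r. c j *\<^sub>R alpha j)"

lemma comb_zero:
  assumes "lc c = 0" "i \<in> {1..r}"
  shows "c i = 0"
proof -
  let ?u = "\<lambda>v. c (inv_into {1..r} alpha v)"
  have "(\<Sum>v\<in>alpha`{1..r}. ?u v *\<^sub>R v) = (\<Sum>j=1..r. ?u (alpha j) *\<^sub>R alpha j)"
    by (rule sum.reindex[OF injA, unfolded comp_def])
  also have "\<dots> = (\<Sum>j=1..r. c j *\<^sub>R alpha j)"
  proof (rule sum.cong)
    fix j assume "j \<in> {1..r}"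
    then show "?u (alpha j) *\<^sub>R alpha j = c j *\<^sub>R alpha j" using inv_into_f_f[OF injA] by metis
  qed simp
  finally have "(\<Sum>v\<in>alpha`{1..r}. ?u v *\<^sub>R v) = 0" using assms unfolding lc_def by simp
  moreover have H: "\<forall>c. (\<Sum>v\<in>alpha`{1..r}. c v *\<^sub>R v) = 0 \<longrightarrow> (\<forall>v\<in>alpha`{1..r}. c v = 0)"
    using indep unfolding independent_explicit by blast
  ultimately have "?u (alpha i) = 0" using H[rule_format, of ?u] assms(2) by blast
  then show ?thesis using inv_into_f_f[OF injA assms(2)] by simp
qed

lemma lc_add: "lc c + lc d = lc (\<lambda>j. c j + d j)"
  unfolding lc_def by (simp add: scaleR_add_left sum.distrib)
lemma lc_scale: "a *\<^sub>R lc c = lc (\<lambda>j. a * c j)"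
  unfolding lc_def by (simp add: scaleR_sum_right)
lemma lc_diff: "lc c - lc d = lc (\<lambda>j. c j - d j)"
  unfolding lc_def by (simp add: scaleR_diff_left sum_subtractf)
lemma lc_zero: "lc (\<lambda>j. 0) = 0"
  unfolding lc_def by simp

lemma comb_eq:
  assumes "lc c = lc d" "i \<in> {1..r}"
  shows "c i = d i"
proof -
  have "lc (\<lambda>j. c j - d j) = 0" using assms(1) lc_diff[of c d] by simp
  from comb_zero[OF this assms(2)] show ?thesis by simp
qed

lemma coord_lc:
  assumes "i \<in> {1..r}"
  shows "coord r alpha i (lc c) = c i"
proof -
  have "\<exists>d. lc c = (\<Sum>j=1..r. d j *\<^sub>R alpha j)" unfolding lc_def by blast
  then have "lc c = (\<Sum>j=1..r. (SOME d. lc c = (\<Sum>j=1..r. d j *\<^sub>R alpha j)) j *\<^sub>R alpha j)"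
    by (rule someI_ex)
  then have "lc c = lc (SOME d. lc c = (\<Sum>j=1..r. d j *\<^sub>R alpha j))" unfolding lc_def .
  from comb_eq[OF this[symmetric] assms] show ?thesis unfolding coord_def lc_def by simp
qed

definition inspan :: "'a \<Rightarrow> bool" where
  "inspan v \<longleftrightarrow> (\<exists>c. v = lc c)"

lemma inspan_repr: "inspan v \<Longrightarrow> v = lc (\<lambda>j. coord r alpha j v)"
proof -
  assume "inspan v"
  then obtain c where c: "v = lc c" unfolding inspan_def by blast
  have "lc (\<lambda>j. coord r alpha j v) = lc c" unfolding lc_def
  proof (rule sum.cong)
    fix j assume "j \<in> {1..r}"
    then show "coord r alpha j v *\<^sub>R alpha j = c j *\<^sub>R alpha j" using coord_lc[of j c] c by simp
  qed simp
  then show ?thesis using c by simp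
qed

lemma coord_add: "inspan x \<Longrightarrow> inspan y \<Longrightarrow> i\<in>{1..r} \<Longrightarrow>
   coord r alpha i (x + y) = coord r alpha i x + coord r alpha i y"
proof -
  assume a: "inspan x" "inspan y" "i\<in>{1..r}"
  obtain c d where "x = lc c" "y = lc d" using a unfolding inspan_def by blast
  then show ?thesis using a(3) by (simp add: lc_add coord_lc)
qed

lemma coord_scale: "inspan x \<Longrightarrow> i\<in>{1..r} \<Longrightarrow> coord r alpha i (c *\<^sub>R x) = c * coord r alpha i x"
proof -
  assume a: "inspan x" "i\<in>{1..r}"
  obtain d where "x = lc d" using a unfolding inspan_def by blast
  then show ?thesis using a(2) by (simp add: lc_scale coord_lc)
qed

lemma inspan_add: "inspan x \<Longrightarrow> inspan y \<Longrightarrow> inspan (x + y)"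
  unfolding inspan_def using lc_add by blast
lemma inspan_scale: "inspan x \<Longrightarrow> inspan (c *\<^sub>R x)"
  unfolding inspan_def using lc_scale by blast
lemma inspan_diff: "inspan x \<Longrightarrow> inspan y \<Longrightarrow> inspan (x - y)"
  unfolding inspan_def using lc_diff by blast
lemma inspan_zero: "inspan 0"
  unfolding inspan_def using lc_zero by metis

lemma alpha_lc: "i \<in> {1..r} \<Longrightarrow> alpha i = lc (\<lambda>k. if k = i then 1 else 0)"
proof -
  assume a: "i \<in> {1..r}"
  have "(\<Sum>k=1..r. (if k = i then 1 else 0) *\<^sub>R alpha k) = (\<Sum>k=1..r. if k = i then alpha k else 0)"
    by (rule sum.cong) auto
  also have "\<dots> = alpha i" using a by (subst sum.delta) auto
  finally show ?thesis unfolding lc_def by simp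
qed
lemma inspan_alpha: "i \<in> {1..r} \<Longrightarrow> inspan (alpha i)"
  unfolding inspan_def using alpha_lc by blast
lemma inspan_Phi: "b \<in> Phi \<Longrightarrow> inspan b"
proof -
  assume "b \<in> Phi"
  then obtain c :: "nat \<Rightarrow> int" where "b = (\<Sum>j=1..r. of_int (c j) *\<^sub>R alpha j)" using intcomb by blast
  then have "b = lc (\<lambda>j. of_int (c j))" unfolding lc_def .
  then show ?thesis unfolding inspan_def by blast
qed

lemma coord_alpha: "i \<in> {1..r} \<Longrightarrow> j \<in> {1..r} \<Longrightarrow> coord r alpha j (alpha i) = (if j = i then 1 else 0)"
  using alpha_lc coord_lc by simp

lemma coord_diff: "inspan x \<Longrightarrow> inspan y \<Longrightarrow> i\<in>{1..r} \<Longrightarrow>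
   coord r alpha i (x - y) = coord r alpha i x - coord r alpha i y"
proof -
  assume a: "inspan x" "inspan y" "i\<in>{1..r}"
  obtain c d where "x = lc c" "y = lc d" using a unfolding inspan_def by blast
  then show ?thesis using a(3) by (simp add: lc_diff coord_lc)
qed

lemma coord_neg: "inspan x \<Longrightarrow> i\<in>{1..r} \<Longrightarrow> coord r alpha i (- x) = - coord r alpha i x"
  using coord_scale[of x i "-1"] by simp

lemma coord_zero: "i \<in> {1..r} \<Longrightarrow> coord r alpha i 0 = 0"
  using coord_lc[of i "\<lambda>j. 0"] lc_zero by simp

lemma zero_iff: "inspan x \<Longrightarrow> x = 0 \<longleftrightarrow> (\<forall>i\<in>{1..r}. coord r alpha i x = 0)"
proof
  assume "inspan x" "\<forall>i\<in>{1..r}. coord r alpha i x = 0"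
  then have h: "x = lc (\<lambda>j. coord r alpha j x)" "\<forall>i\<in>{1..r}. coord r alpha i x = 0"
    using inspan_repr by auto
  have "lc (\<lambda>j. coord r alpha j x) = lc (\<lambda>j. 0)" unfolding lc_def
  proof (rule sum.cong)
    fix j assume "j \<in> {1..r}" then show "coord r alpha j x *\<^sub>R alpha j = 0 *\<^sub>R alpha j" using h(2) by simp
  qed simp
  then show "x = 0" using lc_zero h(1) by simp
qed (simp add: coord_zero)

abbreviation "P \<equiv> pos_roots Phi r alpha"
abbreviation "Nn \<equiv> neg_roots Phi r alpha"
abbreviation "cd \<equiv> coord r alpha"

lemma coord_int: "b \<in> Phi \<Longrightarrow> j \<in> {1..r} \<Longrightarrow> cd j b \<in> \<int>"
proof -
  assume a: "b \<in> Phi" "j \<in> {1..r}"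
  obtain c :: "nat \<Rightarrow> int" where "b = (\<Sum>j=1..r. of_int (c j) *\<^sub>R alpha j)" using intcomb[OF a(1)] by blast
  then have "b = lc (\<lambda>j. of_int (c j))" unfolding lc_def .
  then have "cd j b = of_int (c j)" using coord_lc[OF a(2)] by simp
  then show ?thesis by simp
qed

lemma root_sign: "b \<in> Phi \<Longrightarrow> (\<forall>j\<in>{1..r}. cd j b \<ge> 0) \<or> (\<forall>j\<in>{1..r}. cd j b \<le> 0)"
proof -
  assume a: "b \<in> Phi"
  obtain c :: "nat \<Rightarrow> int" where c: "b = (\<Sum>j=1..r. of_int (c j) *\<^sub>R alpha j)"
     "(\<forall>j\<in>{1..r}. c j \<ge> 0) \<or> (\<forall>j\<in>{1..r}. c j \<le> 0)" using intcomb[OF a(1)] by blast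
  have "b = lc (\<lambda>j. of_int (c j))" using c(1) unfolding lc_def .
  then have "\<forall>j\<in>{1..r}. cd j b = of_int (c j)" using coord_lc by simp
  then show ?thesis using c(2) by auto
qed

lemma refl_self: "a \<noteq> 0 \<Longrightarrow> refl a a = - a"
  unfolding refl_def by (simp add: scaleR_2)

lemma neg_closed: "b \<in> Phi \<Longrightarrow> - b \<in> Phi"
  using reflc[of b b] refl_self[of b] zero by (cases "b = 0") auto

lemma Nn_def2: "Nn = {b \<in> Phi. \<forall>j\<in>{1..r}. cd j b \<le> 0}"
proof
  show "Nn \<subseteq> {b \<in> Phi. \<forall>j\<in>{1..r}. cd j b \<le> 0}"
    unfolding neg_roots_def pos_roots_def using neg_closed inspan_Phi coord_neg by auto
  show "{b \<in> Phi. \<forall>j\<in>{1..r}. cd j b \<le> 0} \<subseteq> Nn"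
  proof
    fix b assume b: "b \<in> {b \<in> Phi. \<forall>j\<in>{1..r}. cd j b \<le> 0}"
    then have "-b \<in> P" unfolding pos_roots_def using neg_closed inspan_Phi coord_neg by auto
    then show "b \<in> Nn" unfolding neg_roots_def by (metis image_eqI minus_minus)
  qed
qed

lemma P_def2: "P = {b \<in> Phi. \<forall>j\<in>{1..r}. cd j b \<ge> 0}"
  unfolding pos_roots_def by simp

lemma P_sub: "P \<subseteq> Phi" and Nn_sub: "Nn \<subseteq> Phi"
  using P_def2 Nn_def2 by auto

lemma pos_or_neg: "b \<in> Phi \<Longrightarrow> b \<in> P \<or> b \<in> Nn"
  using root_sign P_def2 Nn_def2 by auto

lemma not_both: "b \<in> P \<Longrightarrow> b \<notin> Nn"
proof
  assume a: "b \<in> P" "b \<in> Nn"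
  then have "\<forall>j\<in>{1..r}. cd j b = 0" using P_def2 Nn_def2 by force
  then have "b = 0" using zero_iff inspan_Phi a P_sub by blast
  then show False using a P_sub zero by auto
qed

lemma some_pos: "b \<in> Phi \<Longrightarrow> j \<in> {1..r} \<Longrightarrow> cd j b > 0 \<Longrightarrow> b \<in> P"
  using pos_or_neg Nn_def2 by force

lemma some_neg: "b \<in> Phi \<Longrightarrow> j \<in> {1..r} \<Longrightarrow> cd j b < 0 \<Longrightarrow> b \<in> Nn"
  using pos_or_neg P_def2 by force

lemma neg_iff: "b \<in> Nn \<longleftrightarrow> - b \<in> P"
  unfolding neg_roots_def by (metis image_iff minus_minus)

lemma alpha_P: "i \<in> {1..r} \<Longrightarrow> alpha i \<in> P"
  using alphaPhi coord_alpha P_def2 by auto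

lemma alpha_ne0: "i \<in> {1..r} \<Longrightarrow> alpha i \<noteq> 0"
  using alphaPhi[of i] zero by auto

lemma Phi_ne0: "b \<in> Phi \<Longrightarrow> b \<noteq> 0" using zero by auto

lemma refl_refl: "a \<noteq> 0 \<Longrightarrow> refl a (refl a x) = x"
proof -
  assume a: "a \<noteq> 0"
  have aa: "a \<bullet> a \<noteq> 0" using a by simp
  show ?thesis unfolding refl_def using aa
    by (simp add: inner_diff_left algebra_simps)
qed

lemma refl_linear: "linear (refl a)"
  unfolding refl_def by (rule linearI) (auto simp: inner_add_left algebra_simps add_divide_distrib scaleR_add_left)

lemma refl_inner: "a \<noteq> 0 \<Longrightarrow> refl a x \<bullet> refl a y = x \<bullet> y"
proof -
  assume a: "a \<noteq> 0"
  have aa: "a \<bullet> a \<noteq> 0" using a by simp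
  show ?thesis unfolding refl_def using aa
    by (simp add: inner_diff_left inner_diff_right algebra_simps inner_commute)
qed

lemma refl_neg: "refl (- a) = refl a"
  unfolding refl_def by (rule ext) simp

definition orth :: "('a \<Rightarrow> 'a) \<Rightarrow> bool" where
  "orth v \<longleftrightarrow> linear v \<and> (\<forall>x y. v x \<bullet> v y = x \<bullet> y)"

lemma orth_refl: "a \<noteq> 0 \<Longrightarrow> orth (refl a)"
  unfolding orth_def using refl_linear refl_inner by auto

lemma orth_comp: "orth u \<Longrightarrow> orth v \<Longrightarrow> orth (u \<circ> v)"
  unfolding orth_def by (auto intro: linear_compose)

lemma orth_id: "orth id"
  unfolding orth_def by (simp add: linear_id)

lemma conj_refl: "orth v \<Longrightarrow> refl (v a) (v x) = v (refl a x)"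
  unfolding orth_def refl_def
  by (simp add: linear_diff linear_cmul)

lemma conj_refl': "orth v \<Longrightarrow> refl (v a) \<circ> v = v \<circ> refl a"
  using conj_refl by (auto simp: fun_eq_iff)

lemma refl_coord: "inspan x \<Longrightarrow> i \<in> {1..r} \<Longrightarrow> j \<in> {1..r} \<Longrightarrow>
  cd j (refl (alpha i) x) = cd j x - (if j = i then (2 * (x \<bullet> alpha i)) / (alpha i \<bullet> alpha i) else 0)"
  unfolding refl_def by (simp add: coord_diff coord_scale inspan_scale inspan_alpha coord_alpha)

definition sw :: "nat list \<Rightarrow> 'a \<Rightarrow> 'a" where
  "sw is = refl_prod (map alpha is)"

lemma sw_Nil[simp]: "sw [] = id" unfolding sw_def refl_prod_def by simp
lemma sw_Cons: "sw (i # is) = refl (alpha i) \<circ> sw is" unfolding sw_def refl_prod_def by simp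
lemma sw_append: "sw (is @ js) = sw is \<circ> sw js"
  by (induction "is") (auto simp: sw_Cons)
lemma sw_single: "sw [i] = refl (alpha i)" by (simp add: sw_Cons)

lemma sw_orth: "set is \<subseteq> {1..r} \<Longrightarrow> orth (sw is)"
  by (induction "is") (auto simp: sw_Cons orth_id intro!: orth_comp orth_refl alpha_ne0)

lemma sw_linear: "set is \<subseteq> {1..r} \<Longrightarrow> linear (sw is)"
  using sw_orth orth_def by blast

lemma sw_rev: "set is \<subseteq> {1..r} \<Longrightarrow> sw (rev is) \<circ> sw is = id"
proof (induction "is")
  case Nil then show ?case by simp
next
  case (Cons i "is")
  have "sw (rev (i#is)) \<circ> sw (i#is) = sw (rev is) \<circ> (refl (alpha i) \<circ> refl (alpha i)) \<circ> sw is"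
    by (simp add: sw_append sw_Cons o_assoc)
  also have "refl (alpha i) \<circ> refl (alpha i) = id" using refl_refl alpha_ne0 Cons.prems by (auto simp: fun_eq_iff)
  finally show ?case using Cons by simp
qed

lemma sw_rev': "set is \<subseteq> {1..r} \<Longrightarrow> sw is \<circ> sw (rev is) = id"
  using sw_rev[of "rev is"] by simp

lemma sw_inv: "set is \<subseteq> {1..r} \<Longrightarrow> inv (sw is) = sw (rev is)"
  using sw_rev sw_rev' by (metis inv_unique_comp)

lemma sw_bij: "set is \<subseteq> {1..r} \<Longrightarrow> bij (sw is)"
  using sw_rev sw_rev' by (metis o_bij)

lemma sw_Phi: "set is \<subseteq> {1..r} \<Longrightarrow> b \<in> Phi \<Longrightarrow> sw is b \<in> Phi"
  by (induction "is" arbitrary: b) (auto simp: sw_Cons intro!: reflc alphaPhi)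

definition W0 :: "('a \<Rightarrow> 'a) set" where
  "W0 = {v. \<exists>is. set is \<subseteq> {1..r} \<and> v = sw is}"

lemma W0_sw: "set is \<subseteq> {1..r} \<Longrightarrow> sw is \<in> W0" unfolding W0_def by blast
lemma W0E: "v \<in> W0 \<Longrightarrow> (\<And>is. set is \<subseteq> {1..r} \<Longrightarrow> v = sw is \<Longrightarrow> thesis) \<Longrightarrow> thesis"
  unfolding W0_def by blast
lemma W0_comp: "u \<in> W0 \<Longrightarrow> v \<in> W0 \<Longrightarrow> u \<circ> v \<in> W0"
  by (metis W0E W0_sw le_sup_iff set_append sw_append)
lemma W0_id: "id \<in> W0" using W0_sw[of "[]"] by simp
lemma W0_s: "i \<in> {1..r} \<Longrightarrow> refl (alpha i) \<in> W0" using W0_sw[of "[i]"] by (simp add: sw_single)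
lemma W0_inv: "v \<in> W0 \<Longrightarrow> inv v \<in> W0" by (metis W0E W0_sw set_rev sw_inv)
lemma W0_orth: "v \<in> W0 \<Longrightarrow> orth v" by (metis W0E sw_orth)
lemma W0_linear: "v \<in> W0 \<Longrightarrow> linear v" using W0_orth orth_def by blast
lemma W0_Phi: "v \<in> W0 \<Longrightarrow> b \<in> Phi \<Longrightarrow> v b \<in> Phi" by (metis W0E sw_Phi)
lemma W0_bij: "v \<in> W0 \<Longrightarrow> bij v" by (metis W0E sw_bij)
lemma W0_inv_l: "v \<in> W0 \<Longrightarrow> inv v (v x) = x" using W0_bij bij_inv_eq_iff by metis
lemma W0_inv_r: "v \<in> W0 \<Longrightarrow> v (inv v x) = x" using W0_bij bij_inv_eq_iff by metis
lemma W0_neg: "v \<in> W0 \<Longrightarrow> v (- x) = - v x" using W0_linear linear_neg by blast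

lemma s_pos:
  assumes i: "i \<in> {1..r}" and g: "g \<in> P" and ne: "g \<noteq> alpha i"
  shows "refl (alpha i) g \<in> P"
proof -
  have gP: "g \<in> Phi" and sp: "inspan g" using g P_sub inspan_Phi by auto
  have "\<exists>j\<in>{1..r}. j \<noteq> i \<and> cd j g \<noteq> 0"
  proof (rule ccontr)
    assume "\<not> ?thesis"
    then have z: "\<forall>j\<in>{1..r}. j \<noteq> i \<longrightarrow> cd j g = 0" by blast
    have "g = lc (\<lambda>j. cd j g)" by (rule inspan_repr[OF sp])
    also have "\<dots> = lc (\<lambda>j. cd i g * (if j = i then 1 else 0))" unfolding lc_def
      by (rule sum.cong) (use z in auto)
    also have "\<dots> = cd i g *\<^sub>R alpha i" using alpha_lc[OF i] lc_scale by simp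
    finally have ge0: "g = cd i g *\<^sub>R alpha i" .
    define c where "c = cd i g"
    have ge: "g = c *\<^sub>R alpha i" using ge0 unfolding c_def .
    have "c *\<^sub>R alpha i \<in> Phi" using gP ge by simp
    then have "c = 1 \<or> c = -1" using reduced[OF alphaPhi[OF i]] by blast
    moreover have "c \<ge> 0" using g i unfolding P_def2 c_def by blast
    ultimately have "c = 1" by auto
    then show False using ge ne by simp
  qed
  then obtain j where j: "j \<in> {1..r}" "j \<noteq> i" "cd j g \<noteq> 0" by blast
  moreover have "cd j g \<ge> 0" using g j(1) unfolding P_def2 by blast
  ultimately have "cd j g > 0" by simp
  then have "cd j (refl (alpha i) g) > 0" using refl_coord[OF sp i j(1)] j(2) by simp
  then show ?thesis using some_pos reflc[OF alphaPhi[OF i] gP] j(1) by blast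
qed

lemma s_alpha: "i \<in> {1..r} \<Longrightarrow> refl (alpha i) (alpha i) = - alpha i"
  using refl_self alpha_ne0 by blast

lemma negP_not_P: "b \<in> P \<Longrightarrow> - b \<notin> P"
  using not_both neg_iff by auto

definition Nset :: "('a \<Rightarrow> 'a) \<Rightarrow> 'a set" where
  "Nset v = {g \<in> P. v g \<in> Nn}"

lemma Nset_fin: "finite (Nset v)"
proof (rule finite_subset[OF _ fin])
  show "Nset v \<subseteq> Phi" unfolding Nset_def using P_sub by auto
qed

lemma N_step_A:
  assumes v: "v \<in> W0" and i: "i \<in> {1..r}"
  shows "Nset (v \<circ> refl (alpha i)) - {alpha i} = refl (alpha i) ` (Nset v - {alpha i})"
proof -
  let ?s = "refl (alpha i)"
  have ss: "\<And>x. ?s (?s x) = x" using refl_refl alpha_ne0[OF i] by blast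
  have aP: "alpha i \<in> P" using alpha_P[OF i] .
  show ?thesis
  proof
    show "Nset (v \<circ> ?s) - {alpha i} \<subseteq> ?s ` (Nset v - {alpha i})"
    proof
      fix g assume g: "g \<in> Nset (v \<circ> ?s) - {alpha i}"
      then have gP: "g \<in> P" "g \<noteq> alpha i" "v (?s g) \<in> Nn" unfolding Nset_def by auto
      have dP: "?s g \<in> P" using s_pos[OF i gP(1,2)] .
      have "?s g \<noteq> alpha i"
      proof
        assume "?s g = alpha i"
        then have "g = - alpha i" using ss[of g] s_alpha[OF i] by metis
        then show False using gP(1) negP_not_P[OF aP] by simp
      qed
      then have "?s g \<in> Nset v - {alpha i}" using dP gP(3) unfolding Nset_def by auto
      then show "g \<in> ?s ` (Nset v - {alpha i})" using ss[of g] by (metis image_eqI)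
    qed
    show "?s ` (Nset v - {alpha i}) \<subseteq> Nset (v \<circ> ?s) - {alpha i}"
    proof
      fix g assume "g \<in> ?s ` (Nset v - {alpha i})"
      then obtain d where d: "d \<in> P" "d \<noteq> alpha i" "v d \<in> Nn" "g = ?s d" unfolding Nset_def by auto
      have gP: "g \<in> P" using s_pos[OF i d(1,2)] d(4) by simp
      have "g \<noteq> alpha i"
      proof
        assume "g = alpha i"
        then have "d = - alpha i" using ss[of d] s_alpha[OF i] d(4) by metis
        then show False using d(1) negP_not_P[OF aP] by simp
      qed
      then show "g \<in> Nset (v \<circ> ?s) - {alpha i}" using gP d(3,4) ss unfolding Nset_def by auto
    qed
  qed
qed

lemma N_step_B:
  assumes v: "v \<in> W0" and i: "i \<in> {1..r}"
  shows "alpha i \<in> Nset (v \<circ> refl (alpha i)) \<longleftrightarrow> v (alpha i) \<notin> Nn"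
proof -
  have "v (refl (alpha i) (alpha i)) = - v (alpha i)" using s_alpha[OF i] W0_neg[OF v] by simp
  moreover have "v (alpha i) \<in> Phi" using W0_Phi[OF v alphaPhi[OF i]] .
  ultimately show ?thesis unfolding Nset_def using alpha_P[OF i] pos_or_neg not_both neg_iff
    by (auto simp: neg_iff)
qed

lemma N_step:
  assumes v: "v \<in> W0" and i: "i \<in> {1..r}"
  shows "card (Nset (v \<circ> refl (alpha i))) = (if v (alpha i) \<in> Nn then card (Nset v) - 1 else card (Nset v) + 1)"
    and "v (alpha i) \<in> Nn \<Longrightarrow> card (Nset v) \<ge> 1"
proof -
  let ?s = "refl (alpha i)"
  have inj: "inj ?s" using refl_refl alpha_ne0[OF i] by (metis injI)
  have c1: "card (Nset (v \<circ> ?s) - {alpha i}) = card (Nset v - {alpha i})"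
    using N_step_A[OF v i] card_image[OF inj_on_subset[OF inj]] by (metis subset_UNIV)
  have inN: "alpha i \<in> Nset v \<longleftrightarrow> v (alpha i) \<in> Nn" unfolding Nset_def using alpha_P[OF i] by auto
  show "v (alpha i) \<in> Nn \<Longrightarrow> card (Nset v) \<ge> 1"
    using inN Nset_fin card_0_eq by (metis One_nat_def Suc_leI emptyE not_gr0)
  show "card (Nset (v \<circ> ?s)) = (if v (alpha i) \<in> Nn then card (Nset v) - 1 else card (Nset v) + 1)"
  proof (cases "v (alpha i) \<in> Nn")
    case True
    then have "alpha i \<notin> Nset (v \<circ> ?s)" using N_step_B[OF v i] by simp
    then have "card (Nset (v \<circ> ?s)) = card (Nset v - {alpha i})" using c1 by simp
    also have "\<dots> = card (Nset v) - 1" using True inN Nset_fin by (simp add: card_Diff_singleton)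
    finally show ?thesis using True by simp
  next
    case False
    then have a: "alpha i \<in> Nset (v \<circ> ?s)" using N_step_B[OF v i] by simp
    then have "card (Nset (v \<circ> ?s)) = card (Nset (v \<circ> ?s) - {alpha i}) + 1"
      using card_Suc_Diff1[OF Nset_fin a] by simp
    also have "\<dots> = card (Nset v) + 1" using c1 False inN by simp
    finally show ?thesis using False by simp
  qed
qed

lemma exchange:
  assumes "set is \<subseteq> {1..r}" "g \<in> P" "sw is g \<in> Nn"
  shows "\<exists>js. length js + 1 = length is \<and> set js \<subseteq> set is \<and> sw is \<circ> refl g = sw js"
  using assms
proof (induction "is")
  case Nil
  then show ?case using not_both by simp
next
  case (Cons i "is")
  have i: "i \<in> {1..r}" and isS: "set is \<subseteq> {1..r}" using Cons.prems by auto
  show ?case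
  proof (cases "sw is g \<in> Nn")
    case True
    obtain js where js: "length js + 1 = length is" "set js \<subseteq> set is" "sw is \<circ> refl g = sw js"
      using Cons.IH[OF isS Cons.prems(2) True] by blast
    have "sw (i # is) \<circ> refl g = sw (i # js)" by (simp add: sw_Cons js(3)[symmetric] o_assoc)
    then show ?thesis using js by (intro exI[of _ "i # js"]) auto
  next
    case False
    have "sw is g \<in> Phi" using sw_Phi[OF isS] Cons.prems(2) P_sub by auto
    then have pos: "sw is g \<in> P" using False pos_or_neg by blast
    have "refl (alpha i) (sw is g) \<in> Nn" using Cons.prems(3) by (simp add: sw_Cons)
    then have eq: "sw is g = alpha i" using s_pos[OF i pos] not_both by blast
    have g0: "g \<noteq> 0" using Cons.prems(2) P_sub zero by auto
    have "refl (alpha i) \<circ> sw is = sw is \<circ> refl g"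
      using conj_refl'[OF sw_orth[OF isS], of g] eq by simp
    then have "sw (i # is) \<circ> refl g = sw is \<circ> (refl g \<circ> refl g)"
      by (simp add: sw_Cons o_assoc)
    also have "refl g \<circ> refl g = id" using refl_refl[OF g0] by (auto simp: fun_eq_iff)
    finally show ?thesis using isS by (intro exI[of _ "is"]) auto
  qed
qed

lemma inspan_sum: "finite S \<Longrightarrow> (\<forall>j\<in>S. inspan (f j)) \<Longrightarrow> inspan (\<Sum>j\<in>S. f j)"
  by (induction S rule: finite_induct) (auto intro: inspan_add inspan_zero)

lemma coord_sum: "finite S \<Longrightarrow> (\<forall>j\<in>S. inspan (f j)) \<Longrightarrow> i \<in> {1..r} \<Longrightarrow>
   cd i (\<Sum>j\<in>S. f j) = (\<Sum>j\<in>S. cd i (f j))"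
proof (induction S rule: finite_induct)
  case empty then show ?case using coord_zero by simp
next
  case (insert x F)
  have "cd i (f x + sum f F) = cd i (f x) + cd i (sum f F)"
    by (rule coord_add) (use insert in \<open>auto intro: inspan_sum\<close>)
  then show ?case using insert by simp
qed

lemma pos_comb:
  assumes v: "v \<in> W0" and sp: "inspan g" and nn: "\<forall>j\<in>{1..r}. cd j g \<ge> 0"
    and h: "\<forall>j\<in>{1..r}. cd j g \<noteq> 0 \<longrightarrow> v (alpha j) \<in> P" and i: "i \<in> {1..r}"
  shows "cd i (v g) \<ge> 0"
proof -
  have "v g = v (\<Sum>j=1..r. cd j g *\<^sub>R alpha j)" using inspan_repr[OF sp] unfolding lc_def by simp
  also have "\<dots> = (\<Sum>j=1..r. cd j g *\<^sub>R v (alpha j))"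
    using W0_linear[OF v] by (simp add: linear_sum linear_cmul)
  finally have e: "v g = (\<Sum>j=1..r. cd j g *\<^sub>R v (alpha j))" .
  have spj: "\<forall>j\<in>{1..r}. inspan (cd j g *\<^sub>R v (alpha j))"
    using W0_Phi[OF v] alphaPhi inspan_Phi inspan_scale by blast
  have "cd i (v g) = (\<Sum>j=1..r. cd i (cd j g *\<^sub>R v (alpha j)))"
    using coord_sum[OF _ spj i] e by simp
  also have "\<dots> = (\<Sum>j=1..r. cd j g * cd i (v (alpha j)))"
    by (rule sum.cong) (use W0_Phi[OF v] alphaPhi inspan_Phi coord_scale i in auto)
  also have "\<dots> \<ge> 0"
  proof (rule sum_nonneg)
    fix j assume j: "j \<in> {1..r}"
    show "cd j g * cd i (v (alpha j)) \<ge> 0"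
    proof (cases "cd j g = 0")
      case False
      then have "v (alpha j) \<in> P" using h j by blast
      then show ?thesis using nn j i P_def2 by auto
    qed simp
  qed
  finally show ?thesis .
qed

lemma simple_in_N:
  assumes v: "v \<in> W0" and ne: "Nset v \<noteq> {}"
  shows "\<exists>j\<in>{1..r}. v (alpha j) \<in> Nn"
proof (rule ccontr)
  assume "\<not> ?thesis"
  then have h: "\<forall>j\<in>{1..r}. v (alpha j) \<in> P" using pos_or_neg W0_Phi[OF v] alphaPhi by blast
  obtain g where g: "g \<in> P" "v g \<in> Nn" using ne unfolding Nset_def by auto
  have "\<forall>i\<in>{1..r}. cd i (v g) \<ge> 0"
    using pos_comb[OF v] g(1) P_sub inspan_Phi P_def2 h by auto
  then have "v g \<in> P" using P_def2 W0_Phi[OF v] g(1) P_sub by auto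
  then show False using g(2) not_both by blast
qed

lemma Nset_le_len: "set is \<subseteq> {1..r} \<Longrightarrow> card (Nset (sw is)) \<le> length is"
proof (induction "is" rule: rev_induct)
  case Nil
  have "Nset id = {}" unfolding Nset_def using not_both by auto
  then show ?case by (simp add: id_def)
next
  case (snoc i "is")
  have i: "i \<in> {1..r}" and isS: "set is \<subseteq> {1..r}" using snoc.prems by auto
  have e: "sw (is @ [i]) = sw is \<circ> refl (alpha i)" by (simp add: sw_append sw_single)
  have c: "card (Nset (sw is \<circ> refl (alpha i))) \<le> card (Nset (sw is)) + 1"
    using N_step(1)[OF W0_sw[OF isS] i] by (cases "sw is (alpha i) \<in> Nn") auto
  have "length (is @ [i]) = Suc (length is)" by simp
  then show ?case unfolding e using c snoc.IH[OF isS] by linarith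
qed

lemma wlen_le: "set is \<subseteq> {1..r} \<Longrightarrow> v = sw is \<Longrightarrow> wlen r alpha v \<le> length is"
  unfolding wlen_def sw_def by (rule Least_le) blast

lemma wlen_word: "v \<in> W0 \<Longrightarrow> \<exists>is. length is = wlen r alpha v \<and> set is \<subseteq> {1..r} \<and> v = sw is"
proof -
  assume "v \<in> W0"
  then obtain is0 where "set is0 \<subseteq> {1..r}" "v = sw is0" by (rule W0E)
  then have ex: "\<exists>k is. length is = k \<and> set is \<subseteq> {1..r} \<and> v = refl_prod (map alpha is)"
    unfolding sw_def by blast
  show ?thesis unfolding wlen_def sw_def by (rule LeastI_ex[OF ex])
qed

lemma N_empty_id:
  assumes v: "v \<in> W0" and e: "Nset v = {}"
  shows "v = id"
proof -
  obtain "is" where isw: "length is = wlen r alpha v" "set is \<subseteq> {1..r}" "v = sw is"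
    using wlen_word[OF v] by blast
  show ?thesis
  proof (cases "is" rule: rev_exhaust)
    case Nil then show ?thesis using isw by simp
  next
    case (snoc is' k)
    have k: "k \<in> {1..r}" and isS: "set is' \<subseteq> {1..r}" using isw(2) snoc by auto
    have vv: "v = sw is' \<circ> refl (alpha k)" using isw(3) snoc by (simp add: sw_append sw_single)
    have "v (alpha k) \<in> Phi" using W0_Phi[OF v alphaPhi[OF k]] .
    then have vP: "v (alpha k) \<in> P" using e alpha_P[OF k] pos_or_neg unfolding Nset_def by auto
    have "sw is' (alpha k) = sw is' (refl (alpha k) (refl (alpha k) (alpha k)))"
      by (simp add: refl_refl[OF alpha_ne0[OF k]])
    also have "\<dots> = - v (alpha k)" using vv s_alpha[OF k] W0_neg[OF v] by simp
    finally have "sw is' (alpha k) \<in> Nn" using vP neg_iff by simp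
    then obtain js where js: "length js + 1 = length is'" "set js \<subseteq> set is'" "sw is' \<circ> refl (alpha k) = sw js"
      using exchange[OF isS alpha_P[OF k]] by blast
    have "wlen r alpha v \<le> length js" using wlen_le[of js v] js isS vv by auto
    then show ?thesis using isw(1) snoc js(1) by simp
  qed
qed

lemma word_of_N: "v \<in> W0 \<Longrightarrow> \<exists>is. length is = card (Nset v) \<and> set is \<subseteq> {1..r} \<and> v = sw is"
proof (induction "card (Nset v)" arbitrary: v)
  case 0
  then have "Nset v = {}" using Nset_fin by simp
  then have "v = id" using N_empty_id 0 by blast
  then show ?case using 0 by (intro exI[of _ "[]"]) simp
next
  case (Suc n)
  then have "Nset v \<noteq> {}" by auto
  then obtain j where j: "j \<in> {1..r}" "v (alpha j) \<in> Nn" using simple_in_N Suc by blast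
  let ?v' = "v \<circ> refl (alpha j)"
  have v': "?v' \<in> W0" using W0_comp Suc.prems W0_s j(1) by blast
  have "card (Nset ?v') = n" using N_step(1)[OF Suc.prems j(1)] j(2) Suc.hyps(2) by simp
  then obtain js where js: "length js = n" "set js \<subseteq> {1..r}" "?v' = sw js" using Suc.hyps(1) v' by metis
  have "v = ?v' \<circ> refl (alpha j)" by (simp add: fun_eq_iff refl_refl[OF alpha_ne0[OF j(1)]])
  then have "v = sw (js @ [j])" using js(3) by (simp add: sw_append sw_single)
  then show ?case using js j Suc.hyps(2) by (intro exI[of _ "js @ [j]"]) auto
qed

lemma wlen_N: "v \<in> W0 \<Longrightarrow> wlen r alpha v = card (Nset v)"
proof -
  assume v: "v \<in> W0"
  obtain "is" where isw: "length is = wlen r alpha v" "set is \<subseteq> {1..r}" "v = sw is"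
    using wlen_word[OF v] by blast
  obtain js where js: "length js = card (Nset v)" "set js \<subseteq> {1..r}" "v = sw js"
    using word_of_N[OF v] by blast
  show ?thesis using Nset_le_len[OF isw(2)] isw wlen_le[OF js(2,3)] js(1) by simp
qed

lemma wlen_inv_le: "v \<in> W0 \<Longrightarrow> wlen r alpha (inv v) \<le> wlen r alpha v"
proof -
  assume v: "v \<in> W0"
  obtain "is" where isw: "length is = wlen r alpha v" "set is \<subseteq> {1..r}" "v = sw is"
    using wlen_word[OF v] by blast
  have "inv v = sw (rev is)" using sw_inv[OF isw(2)] isw(3) by simp
  then show ?thesis using wlen_le[of "rev is" "inv v"] isw by simp
qed

lemma wlen_inv: "v \<in> W0 \<Longrightarrow> wlen r alpha (inv v) = wlen r alpha v"
  using wlen_inv_le[of v] wlen_inv_le[of "inv v"] W0_inv inv_inv_eq W0_bij by fastforce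

lemma left_descent:
  assumes v: "v \<in> W0" and b: "b \<in> P" and h: "inv v b \<in> Nn"
  shows "wlen r alpha (refl b \<circ> v) < wlen r alpha v"
proof -
  obtain "is" where isw: "length is = wlen r alpha v" "set is \<subseteq> {1..r}" "v = sw is"
    using wlen_word[OF v] by blast
  have iv: "inv v = sw (rev is)" using sw_inv[OF isw(2)] isw(3) by simp
  obtain js where js: "length js + 1 = length (rev is)" "set js \<subseteq> set (rev is)" "sw (rev is) \<circ> refl b = sw js"
    using exchange[of "rev is" b] isw(2) b h iv by auto
  have b0: "b \<noteq> 0" using b P_sub zero by auto
  have rr: "refl b \<circ> refl b = id" using refl_refl[OF b0] by (auto simp: fun_eq_iff)
  have jsS: "set js \<subseteq> {1..r}" using js(2) isw(2) by auto
  have "refl b \<circ> v = refl b \<circ> v \<circ> (sw js \<circ> sw (rev js))" using sw_rev'[OF jsS] by simp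
  also have "\<dots> = refl b \<circ> (v \<circ> sw (rev is)) \<circ> refl b \<circ> sw (rev js)" by (simp add: js(3)[symmetric] o_assoc)
  also have "v \<circ> sw (rev is) = id" using isw(3) sw_rev'[OF isw(2)] by simp
  finally have eq: "refl b \<circ> v = refl b \<circ> id \<circ> refl b \<circ> sw (rev js)" .
  have "refl b \<circ> v = sw (rev js)" using eq by (simp add: fun_eq_iff refl_refl[OF b0])
  then have "wlen r alpha (refl b \<circ> v) \<le> length js" using wlen_le[of "rev js"] jsS by simp
  then show ?thesis using js(1) isw(1) by simp
qed

definition ht :: "'a \<Rightarrow> real" where "ht g = (\<Sum>j=1..r. cd j g)"

lemma root_conj: "b \<in> P \<Longrightarrow> \<exists>v\<in>W0. \<exists>k\<in>{1..r}. b = v (alpha k)"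
proof -
  have "\<forall>b\<in>P. ht b \<le> real n \<longrightarrow> (\<exists>v\<in>W0. \<exists>k\<in>{1..r}. b = v (alpha k))" for n
  proof (induction n)
    case 0
    show ?case
    proof (intro ballI impI)
      fix b assume b: "b \<in> P" "ht b \<le> real 0"
      have nn: "\<forall>j\<in>{1..r}. cd j b \<ge> 0" using b P_def2 by auto
      have "b \<noteq> 0" using b P_sub zero by auto
      then obtain j where j: "j \<in> {1..r}" "cd j b \<noteq> 0" using zero_iff inspan_Phi b P_sub by blast
      have "cd j b \<le> ht b" unfolding ht_def using nn j
        by (intro member_le_sum) auto
      then show "\<exists>v\<in>W0. \<exists>k\<in>{1..r}. b = v (alpha k)" using b nn j by force
    qed
  next
    case (Suc n)
    show ?case
    proof (intro ballI impI)
      fix b assume b: "b \<in> P" "ht b \<le> real (Suc n)"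
      show "\<exists>v\<in>W0. \<exists>k\<in>{1..r}. b = v (alpha k)"
      proof (cases "\<exists>k\<in>{1..r}. b = alpha k")
        case True
        then obtain k where "k \<in> {1..r}" "b = alpha k" by blast
        then show ?thesis using W0_id by (intro bexI[of _ id]) auto
      next
        case False
        have bP: "b \<in> Phi" and sp: "inspan b" using b P_sub inspan_Phi by auto
        have nn: "\<forall>j\<in>{1..r}. cd j b \<ge> 0" using b P_def2 by auto
        have "\<exists>i\<in>{1..r}. b \<bullet> alpha i > 0"
        proof (rule ccontr)
          assume "\<not> ?thesis"
          then have le: "\<forall>i\<in>{1..r}. b \<bullet> alpha i \<le> 0" by auto
          have "b \<bullet> b = b \<bullet> (\<Sum>j=1..r. cd j b *\<^sub>R alpha j)" using inspan_repr[OF sp] unfolding lc_def by simp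
          also have "\<dots> = (\<Sum>j=1..r. cd j b * (b \<bullet> alpha j))" by (simp add: inner_sum_right)
          also have "\<dots> \<le> 0" using le nn by (intro sum_nonpos) (simp add: mult_nonneg_nonpos)
          finally show False using Phi_ne0[OF bP] inner_gt_zero_iff[of b] by linarith
        qed
        then obtain i where i: "i \<in> {1..r}" "b \<bullet> alpha i > 0" by blast
        define k where "k = (2 * (b \<bullet> alpha i)) / (alpha i \<bullet> alpha i)"
        have kpos: "k > 0" unfolding k_def using i alpha_ne0 by (simp add: field_simps)
        let ?b' = "refl (alpha i) b"
        have b'P: "?b' \<in> P" using s_pos[OF i(1) b(1)] False i(1) by blast
        have cb': "\<forall>j\<in>{1..r}. cd j ?b' = cd j b - (if j = i then k else 0)"
          using refl_coord[OF sp i(1)] unfolding k_def by simp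
        have keq: "k = cd i b - cd i ?b'" using cb' i(1) by simp
        have i1: "cd i b \<in> \<int>" using coord_int[OF bP i(1)] .
        have i2: "cd i ?b' \<in> \<int>" using coord_int[OF _ i(1)] b'P P_sub by blast
        have "cd i b - cd i ?b' \<in> \<int>" using Ints_diff[OF i1 i2] .
        then have "k \<in> \<int>" using keq by simp
        then obtain m :: int where m: "k = of_int m" by (elim Ints_cases)
        then have "m > 0" using kpos by simp
        then have k1: "k \<ge> 1" using m by simp
        have "ht ?b' = (\<Sum>j=1..r. cd j b - (if j = i then k else 0))"
          unfolding ht_def by (rule sum.cong) (use cb' in auto)
        also have "\<dots> = ht b - k" unfolding ht_def using i(1) by (simp add: sum_subtractf sum.delta)
        finally have "ht ?b' \<le> real n" using b(2) k1 by simp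
        then obtain v k' where vk: "v \<in> W0" "k' \<in> {1..r}" "?b' = v (alpha k')" using Suc.IH b'P by blast
        have "b = refl (alpha i) ?b'" by (simp add: refl_refl[OF alpha_ne0[OF i(1)]])
        then have "b = (refl (alpha i) \<circ> v) (alpha k')" using vk by simp
        then show ?thesis using W0_comp[OF W0_s[OF i(1)] vk(1)] vk(2) by blast
      qed
    qed
  qed
  moreover assume "b \<in> P"
  moreover obtain n where "ht b \<le> real n" using real_arch_simple by blast
  ultimately show ?thesis by blast
qed

lemma refl_W0: "b \<in> Phi \<Longrightarrow> refl b \<in> W0"
proof -
  have posc: "refl b \<in> W0" if b: "b \<in> P" for b
  proof -
    obtain v k where vk: "v \<in> W0" "k \<in> {1..r}" "b = v (alpha k)" using root_conj[OF b] by blast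
    have "refl b \<circ> v = v \<circ> refl (alpha k)" using conj_refl'[OF W0_orth[OF vk(1)]] vk(3) by simp
    then have "refl b = v \<circ> refl (alpha k) \<circ> inv v"
      using W0_inv_r[OF vk(1)] by (auto simp: fun_eq_iff) (metis comp_apply)
    then show ?thesis using W0_comp W0_inv vk W0_s by metis
  qed
  assume "b \<in> Phi"
  then show ?thesis using pos_or_neg posc neg_iff refl_neg by metis
qed

lemma weyl_W0: "w \<in> weyl_group Phi \<Longrightarrow> w \<in> W0"
proof (induction rule: weyl_group.induct)
  case id_in show ?case by (rule W0_id)
next
  case (refl_in a w) then show ?case using W0_comp refl_W0 by blast
qed

definition Ipres :: "nat set \<Rightarrow> ('a \<Rightarrow> 'a) \<Rightarrow> bool" where
  "Ipres I y \<longleftrightarrow> y \<in> W0 \<and> (\<forall>g\<in>Phi. \<forall>i\<in>I. cd i (y g) = cd i g)"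

lemma Ipres_inv: "Ipres I y \<Longrightarrow> Ipres I (inv y)"
  unfolding Ipres_def
proof (intro conjI ballI)
  assume a: "y \<in> W0 \<and> (\<forall>g\<in>Phi. \<forall>i\<in>I. cd i (y g) = cd i g)"
  show "inv y \<in> W0" using a W0_inv by blast
  fix g i assume g: "g \<in> Phi" and i: "i \<in> I"
  have "inv y g \<in> Phi" using W0_Phi[OF W0_inv] a g by blast
  then have "cd i (y (inv y g)) = cd i (inv y g)" using a i by blast
  moreover have "y (inv y g) = g" using W0_inv_r[of y g] a by blast
  ultimately show "cd i (inv y g) = cd i g" by simp
qed

lemma Ipres_comp: "Ipres I y \<Longrightarrow> Ipres I z \<Longrightarrow> Ipres I (y \<circ> z)"
  unfolding Ipres_def using W0_comp W0_Phi by auto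

lemma Ipres_refl:
  assumes I: "I \<subseteq> {1..r}" and b: "b \<in> Phi" and z: "\<forall>i\<in>I. cd i b = 0"
  shows "Ipres I (refl b)"
  unfolding Ipres_def
proof (intro conjI ballI)
  show "refl b \<in> W0" using refl_W0[OF b] .
  fix g i assume g: "g \<in> Phi" and i: "i \<in> I"
  have i': "i \<in> {1..r}" using I i by blast
  have "cd i (refl b g) = cd i g - (2 * (g \<bullet> b) / (b \<bullet> b)) * cd i b"
    unfolding refl_def using coord_diff[OF inspan_Phi[OF g] inspan_scale[OF inspan_Phi[OF b]] i']
      coord_scale[OF inspan_Phi[OF b] i'] by simp
  then show "cd i (refl b g) = cd i g" using z i by simp
qed

lemma Ipres_s: "I \<subseteq> {1..r} \<Longrightarrow> j \<in> {1..r} - I \<Longrightarrow> Ipres I (refl (alpha j))"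
  by (rule Ipres_refl) (auto simp: alphaPhi coord_alpha)

lemma Ipres_word: "I \<subseteq> {1..r} \<Longrightarrow> set ys \<subseteq> {1..r} - I \<Longrightarrow> Ipres I (sw ys)"
proof (induction ys)
  case Nil then show ?case unfolding Ipres_def using W0_id by simp
next
  case (Cons j ys)
  have e: "sw (j # ys) = refl (alpha j) \<circ> sw ys" by (rule sw_Cons)
  show ?case unfolding e by (rule Ipres_comp[OF Ipres_s]) (use Cons in auto)
qed

definition meets :: "nat set \<Rightarrow> 'a \<Rightarrow> bool" where
  "meets I b \<longleftrightarrow> (\<exists>i\<in>I. i \<in> supp r alpha b)"

lemma R_def2: "R_set Phi r alpha I u = {b \<in> P \<inter> u ` Nn. meets I b}"
  unfolding R_set_def meets_def by simp

lemma meets_iff: "I \<subseteq> {1..r} \<Longrightarrow> meets I b \<longleftrightarrow> (\<exists>i\<in>I. cd i b \<noteq> 0)"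
  unfolding meets_def supp_def by blast

lemma Ipres_pos:
  assumes I: "I \<subseteq> {1..r}" and y: "Ipres I y" and b: "b \<in> P" and m: "meets I b"
  shows "y b \<in> P \<and> meets I (y b)"
proof -
  obtain i where i: "i \<in> I" "cd i b \<noteq> 0" using m meets_iff[OF I] by blast
  have bP: "b \<in> Phi" using b P_sub by blast
  have ci: "cd i (y b) = cd i b" using y bP i(1) unfolding Ipres_def by blast
  have "cd i b \<ge> 0" using b I i(1) unfolding P_def2 by blast
  then have "cd i (y b) > 0" using ci i(2) by simp
  moreover have "y b \<in> Phi" using W0_Phi y bP unfolding Ipres_def by blast
  ultimately have "y b \<in> P" using some_pos I i(1) by blast
  moreover have "cd i (y b) \<noteq> 0" using ci i(2) by simp
  then have "meets I (y b)" using meets_iff[OF I] i(1) by blast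
  ultimately show ?thesis by blast
qed

lemma R_fin: "finite (R_set Phi r alpha I u)"
  by (rule finite_subset[OF _ fin]) (auto simp: R_def2 dest: subsetD[OF P_sub])

lemma R_image_sub:
  assumes I: "I \<subseteq> {1..r}" and y: "Ipres I y" and u: "u \<in> W0"
  shows "y ` R_set Phi r alpha I u \<subseteq> R_set Phi r alpha I (y \<circ> u)"
proof
  fix c assume "c \<in> y ` R_set Phi r alpha I u"
  then obtain b d where bd: "c = y b" "b \<in> P" "meets I b" "d \<in> Nn" "b = u d" unfolding R_def2 by blast
  have "y b \<in> P \<and> meets I (y b)" by (rule Ipres_pos[OF I y bd(2,3)])
  moreover have "y b = (y \<circ> u) d" using bd(5) by simp
  ultimately show "c \<in> R_set Phi r alpha I (y \<circ> u)" unfolding R_def2 using bd(1,4) by blast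
qed

lemma R_card_inv:
  assumes I: "I \<subseteq> {1..r}" and y: "Ipres I y" and u: "u \<in> W0"
  shows "card (R_set Phi r alpha I (y \<circ> u)) = card (R_set Phi r alpha I u)"
proof -
  have yW: "y \<in> W0" using y unfolding Ipres_def by blast
  have injy: "inj y" using W0_bij[OF yW] bij_is_inj by blast
  have injiy: "inj (inv y)" using W0_bij[OF W0_inv[OF yW]] bij_is_inj by blast
  have yu: "y \<circ> u \<in> W0" using W0_comp[OF yW u] .
  have "card (R_set Phi r alpha I u) = card (y ` R_set Phi r alpha I u)"
    using card_image[OF inj_on_subset[OF injy]] by simp
  also have "\<dots> \<le> card (R_set Phi r alpha I (y \<circ> u))"
    by (rule card_mono[OF R_fin R_image_sub[OF I y u]])
  finally have le1: "card (R_set Phi r alpha I u) \<le> card (R_set Phi r alpha I (y \<circ> u))" .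
  have e: "inv y \<circ> (y \<circ> u) = u" using W0_inv_l[OF yW] by (simp add: fun_eq_iff)
  have "card (R_set Phi r alpha I (y \<circ> u)) = card (inv y ` R_set Phi r alpha I (y \<circ> u))"
    using card_image[OF inj_on_subset[OF injiy]] by simp
  also have "\<dots> \<le> card (R_set Phi r alpha I (inv y \<circ> (y \<circ> u)))"
    by (rule card_mono[OF R_fin R_image_sub[OF I Ipres_inv[OF y] yu]])
  finally show ?thesis using le1 e by simp
qed

lemma Inv_Nset: "v \<in> W0 \<Longrightarrow> P \<inter> v ` Nn = Nset (inv v)"
proof
  assume v: "v \<in> W0"
  show "P \<inter> v ` Nn \<subseteq> Nset (inv v)"
  proof
    fix c assume "c \<in> P \<inter> v ` Nn"
    then obtain d where "c \<in> P" "d \<in> Nn" "c = v d" by blast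
    then show "c \<in> Nset (inv v)" unfolding Nset_def using W0_inv_l[OF v] by simp
  qed
  show "Nset (inv v) \<subseteq> P \<inter> v ` Nn"
  proof
    fix c assume "c \<in> Nset (inv v)"
    then have c: "c \<in> P" "inv v c \<in> Nn" unfolding Nset_def by auto
    have "c = v (inv v c)" using W0_inv_r[OF v] by simp
    then show "c \<in> P \<inter> v ` Nn" using c by blast
  qed
qed

lemma Inv_card: "v \<in> W0 \<Longrightarrow> card (P \<inter> v ` Nn) = wlen r alpha v"
  using Inv_Nset wlen_N[OF W0_inv] wlen_inv by simp

lemma desc_left_inv:
  assumes u: "u \<in> W0" and b: "b \<in> P" and d: "wlen r alpha (refl b \<circ> u) < wlen r alpha u"
  shows "inv u b \<in> Nn"
proof (rule ccontr)
  assume nn: "inv u b \<notin> Nn"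
  have "inv u b \<in> Phi" using W0_Phi[OF W0_inv[OF u]] b P_sub by blast
  then have pos: "inv u b \<in> P" using nn pos_or_neg by blast
  have b0: "b \<noteq> 0" using b P_sub zero by blast
  let ?v = "refl b \<circ> u"
  have v: "?v \<in> W0" using W0_comp[OF refl_W0 u] b P_sub by blast
  have iv: "inv ?v = inv u \<circ> refl b"
    using o_inv_distrib[OF W0_bij[OF refl_W0] W0_bij[OF u]] b P_sub
      inv_unique_comp[of "refl b" "refl b"] refl_refl[OF b0] by (auto simp: fun_eq_iff)
  have "inv ?v b = - inv u b"
    using iv refl_self[OF b0] W0_neg[OF W0_inv[OF u]] by simp
  then have "inv ?v b \<in> Nn" using pos neg_iff by simp
  then have "wlen r alpha (refl b \<circ> ?v) < wlen r alpha ?v" by (rule left_descent[OF v b])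
  moreover have "refl b \<circ> ?v = u" using refl_refl[OF b0] by (simp add: fun_eq_iff)
  ultimately show False using d by simp
qed

lemma inv_s_comp:
  assumes x: "x \<in> W0" and j: "j \<in> {1..r}"
  shows "inv (refl (alpha j) \<circ> x) = inv x \<circ> refl (alpha j)"
proof -
  have rr: "\<And>z. refl (alpha j) (refl (alpha j) z) = z" using refl_refl[OF alpha_ne0[OF j]] .
  have "inv (refl (alpha j)) = refl (alpha j)"
    by (rule inv_unique_comp) (auto simp: fun_eq_iff rr)
  then show ?thesis using o_inv_distrib[OF W0_bij[OF W0_s[OF j]] W0_bij[OF x]] by simp
qed

lemma min_x:
  assumes I: "I \<subseteq> {1..r}" and u: "u \<in> W0"
  shows "\<exists>ys. set ys \<subseteq> {1..r} - I \<and> (\<forall>j\<in>{1..r} - I. inv (sw ys \<circ> u) (alpha j) \<in> P)"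
proof -
  obtain ys where ys: "set ys \<subseteq> {1..r} - I"
    and mn: "\<forall>zs. set zs \<subseteq> {1..r} - I \<longrightarrow> wlen r alpha (sw ys \<circ> u) \<le> wlen r alpha (sw zs \<circ> u)"
    using ex_has_least_nat[of "\<lambda>ys. set ys \<subseteq> {1..r} - I" "[]" "\<lambda>ys. wlen r alpha (sw ys \<circ> u)"] by auto
  have ysr: "set ys \<subseteq> {1..r}" using ys by blast
  let ?x = "sw ys \<circ> u"
  have x: "?x \<in> W0" using W0_comp[OF W0_sw[OF ysr] u] .
  have "inv ?x (alpha j) \<in> P" if j: "j \<in> {1..r} - I" for j
  proof (rule ccontr)
    assume np: "inv ?x (alpha j) \<notin> P"
    have jr: "j \<in> {1..r}" using j by blast
    have "inv ?x (alpha j) \<in> Phi" using W0_Phi[OF W0_inv[OF x] alphaPhi[OF jr]] .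
    then have nn: "inv ?x (alpha j) \<in> Nn" using np pos_or_neg by blast
    have ix: "inv ?x \<in> W0" using W0_inv[OF x] .
    have c1: "card (Nset (inv ?x \<circ> refl (alpha j))) = card (Nset (inv ?x)) - 1"
      using N_step(1)[OF ix jr] nn by simp
    have c2: "card (Nset (inv ?x)) \<ge> 1" using N_step(2)[OF ix jr nn] .
    have "sw (j # ys) \<circ> u = refl (alpha j) \<circ> ?x" by (simp add: sw_Cons o_assoc)
    then have "inv (sw (j # ys) \<circ> u) = inv ?x \<circ> refl (alpha j)" using inv_s_comp[OF x jr] by simp
    moreover have "sw (j # ys) \<circ> u \<in> W0" using W0_comp[OF W0_sw u] ysr jr by simp
    ultimately have "wlen r alpha (sw (j # ys) \<circ> u) = card (Nset (inv ?x \<circ> refl (alpha j)))"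
      using wlen_inv wlen_N W0_inv by metis
    moreover have "wlen r alpha ?x = card (Nset (inv ?x))" using wlen_inv[OF x] wlen_N[OF ix] by simp
    moreover have "wlen r alpha ?x \<le> wlen r alpha (sw (j # ys) \<circ> u)" using mn ys j by simp
    ultimately show False using c1 c2 by linarith
  qed
  then show ?thesis using ys by blast
qed

lemma x_noJ:
  assumes I: "I \<subseteq> {1..r}" and x: "x \<in> W0" and h: "\<forall>j\<in>{1..r} - I. inv x (alpha j) \<in> P"
  shows "R_set Phi r alpha I x = P \<inter> x ` Nn"
proof
  show "R_set Phi r alpha I x \<subseteq> P \<inter> x ` Nn" unfolding R_def2 by blast
  show "P \<inter> x ` Nn \<subseteq> R_set Phi r alpha I x"
  proof
    fix c assume c: "c \<in> P \<inter> x ` Nn"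
    then obtain d where d: "c \<in> P" "d \<in> Nn" "c = x d" by blast
    have "meets I c"
    proof (rule ccontr)
      assume "\<not> meets I c"
      then have z: "\<forall>i\<in>I. cd i c = 0" using meets_iff[OF I] by blast
      have cP: "c \<in> Phi" using d(1) P_sub by blast
      have nn: "\<forall>j\<in>{1..r}. cd j c \<ge> 0" using d(1) unfolding P_def2 by blast
      have hh: "\<forall>j\<in>{1..r}. cd j c \<noteq> 0 \<longrightarrow> inv x (alpha j) \<in> P" using h z by blast
      have "\<forall>i\<in>{1..r}. cd i (inv x c) \<ge> 0"
        using pos_comb[OF W0_inv[OF x] inspan_Phi[OF cP] nn hh] by blast
      moreover have "inv x c \<in> Phi" using W0_Phi[OF W0_inv[OF x] cP] .
      ultimately have "inv x c \<in> P" unfolding P_def2 by blast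
      moreover have "inv x c = d" using d(3) W0_inv_l[OF x] by simp
      ultimately show False using d(2) not_both by blast
    qed
    then show "c \<in> R_set Phi r alpha I x" unfolding R_def2 using c by blast
  qed
qed

lemma R_le_wlen: "u \<in> W0 \<Longrightarrow> card (R_set Phi r alpha I u) \<le> wlen r alpha u"
proof -
  assume u: "u \<in> W0"
  have "card (R_set Phi r alpha I u) \<le> card (P \<inter> u ` Nn)"
    by (rule card_mono) (auto simp: R_def2 intro: finite_subset[OF _ fin] dest: subsetD[OF P_sub])
  then show ?thesis using Inv_card[OF u] by simp
qed

lemma NK:
  assumes I: "I \<subseteq> {1..r}" and u: "u \<in> W0" and b: "b \<in> P"
    and d: "wlen r alpha (refl b \<circ> u) < wlen r alpha u"
  shows "card (R_set Phi r alpha I (refl b \<circ> u)) + (if meets I b then 1 else 0) \<le> card (R_set Phi r alpha I u)"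
proof (cases "meets I b")
  case False
  have bP: "b \<in> Phi" using b P_sub by blast
  have "\<forall>i\<in>I. cd i b = 0" using False meets_iff[OF I] by blast
  then have "Ipres I (refl b)" using Ipres_refl[OF I bP] by blast
  then show ?thesis using R_card_inv[OF I _ u] False by simp
next
  case True
  obtain ys where ys: "set ys \<subseteq> {1..r} - I" and h: "\<forall>j\<in>{1..r} - I. inv (sw ys \<circ> u) (alpha j) \<in> P"
    using min_x[OF I u] by blast
  let ?y = "sw ys" let ?x = "?y \<circ> u"
  have ysr: "set ys \<subseteq> {1..r}" using ys by blast
  have yp: "Ipres I ?y" using Ipres_word[OF I ys] .
  have yW: "?y \<in> W0" using W0_sw[OF ysr] .
  have x: "?x \<in> W0" using W0_comp[OF yW u] .
  have Rx: "card (R_set Phi r alpha I ?x) = wlen r alpha ?x"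
    using x_noJ[OF I x h] Inv_card[OF x] by simp
  have Ru: "card (R_set Phi r alpha I ?x) = card (R_set Phi r alpha I u)"
    using R_card_inv[OF I yp u] .
  let ?b' = "?y b"
  have b'm: "?b' \<in> P \<and> meets I ?b'" using Ipres_pos[OF I yp b True] .
  have iub: "inv u b \<in> Nn" using desc_left_inv[OF u b d] .
  have ix: "inv ?x = inv u \<circ> inv ?y" using o_inv_distrib[OF W0_bij[OF yW] W0_bij[OF u]] .
  have "inv ?x ?b' = inv u b" using ix W0_inv_l[OF yW] by simp
  then have "inv ?x ?b' \<in> Nn" using iub by simp
  then have lt: "wlen r alpha (refl ?b' \<circ> ?x) < wlen r alpha ?x"
    using left_descent[OF x] b'm by blast
  have b'P: "?b' \<in> Phi" using b'm P_sub by blast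
  have xs: "refl ?b' \<circ> ?x \<in> W0" using W0_comp[OF refl_W0[OF b'P] x] .
  have conj: "refl (inv ?y ?b') \<circ> inv ?y = inv ?y \<circ> refl ?b'"
    using conj_refl'[OF W0_orth[OF W0_inv[OF yW]]] .
  have "inv ?y ?b' = b" using W0_inv_l[OF yW] by simp
  then have "refl b \<circ> u = inv ?y \<circ> (refl ?b' \<circ> ?x)"
    using conj W0_inv_l[OF yW] by (auto simp: fun_eq_iff) (metis comp_apply)
  then have "card (R_set Phi r alpha I (refl b \<circ> u)) = card (R_set Phi r alpha I (refl ?b' \<circ> ?x))"
    using R_card_inv[OF I Ipres_inv[OF yp] xs] by simp
  also have "\<dots> \<le> wlen r alpha (refl ?b' \<circ> ?x)" using R_le_wlen[OF xs] .
  finally show ?thesis using lt Rx Ru True by simp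
qed

lemma refl_prod_Nil: "refl_prod [] = id" unfolding refl_prod_def by simp
lemma refl_prod_Cons: "refl_prod (b # bs) = refl b \<circ> refl_prod bs" unfolding refl_prod_def by simp
lemma refl_prod_append: "refl_prod (xs @ ys) = refl_prod xs \<circ> refl_prod ys"
  by (induction xs) (simp_all add: refl_prod_Nil refl_prod_Cons o_assoc)

lemma refl_prod_W0: "set bs \<subseteq> Phi \<Longrightarrow> refl_prod bs \<in> W0"
proof (induction bs)
  case Nil show ?case unfolding refl_prod_Nil by (rule W0_id)
next
  case (Cons b bs)
  have e: "refl_prod (b # bs) = refl b \<circ> refl_prod bs" by (rule refl_prod_Cons)
  show ?case unfolding e by (rule W0_comp) (use Cons refl_W0 in auto)
qed

lemma partial_w_0: "partial_w bs w 0 = w"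
  unfolding partial_w_def by (simp add: refl_prod_Nil)

lemma partial_w_Suc: "k < length bs \<Longrightarrow> partial_w bs w (Suc k) = refl (bs ! k) \<circ> partial_w bs w k"
proof -
  assume k: "k < length bs"
  have "rev (take (Suc k) bs) = bs ! k # rev (take k bs)" using take_Suc_conv_app_nth[OF k] by simp
  then show ?thesis unfolding partial_w_def by (simp add: refl_prod_Cons o_assoc)
qed

lemma partial_w_W0: "w \<in> W0 \<Longrightarrow> set bs \<subseteq> Phi \<Longrightarrow> partial_w bs w k \<in> W0"
proof -
  assume w: "w \<in> W0" and bs: "set bs \<subseteq> Phi"
  have "set (rev (take k bs)) \<subseteq> Phi" using bs set_take_subset by fastforce
  then show ?thesis unfolding partial_w_def using W0_comp[OF refl_prod_W0 w] by blast
qed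

lemma nec_count:
  assumes w: "w \<in> W0" and sp: "sorting_process Phi r alpha w bs" and I: "I \<subseteq> {1..r}"
  shows "card {k. k < length bs \<and> meets I (bs ! k)} \<le> card (R_set Phi r alpha I w)"
proof -
  have len: "\<forall>i\<le>length bs. wlen r alpha (partial_w bs w i) = length bs - i"
    and bsP: "set bs \<subseteq> P" using sp unfolding sorting_process_def by auto
  have bsPhi: "set bs \<subseteq> Phi" using bsP P_sub by blast
  have "m \<le> length bs \<Longrightarrow> card (R_set Phi r alpha I (partial_w bs w m)) + card {k. k < m \<and> meets I (bs ! k)}
         \<le> card (R_set Phi r alpha I w)" for m
  proof (induction m)
    case 0 then show ?case by (simp add: partial_w_0)
  next
    case (Suc m)
    then have m: "m < length bs" by simp
    let ?u = "partial_w bs w m"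
    have u: "?u \<in> W0" using partial_w_W0[OF w bsPhi] .
    have b: "bs ! m \<in> P" using bsP m by auto
    have ps: "partial_w bs w (Suc m) = refl (bs ! m) \<circ> ?u" using partial_w_Suc[OF m] .
    have "wlen r alpha (refl (bs ! m) \<circ> ?u) < wlen r alpha ?u"
      using len m ps by (metis Suc_leI diff_less_mono2 less_imp_le_nat lessI)
    then have nk: "card (R_set Phi r alpha I (refl (bs ! m) \<circ> ?u)) + (if meets I (bs ! m) then 1 else 0)
        \<le> card (R_set Phi r alpha I ?u)" using NK[OF I u b] by blast
    have fin: "finite {k. k < m \<and> meets I (bs ! k)}" by simp
    have cnt: "card {k. k < Suc m \<and> meets I (bs ! k)} = card {k. k < m \<and> meets I (bs ! k)} + (if meets I (bs ! m) then 1 else 0)"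
    proof (cases "meets I (bs ! m)")
      case True
      then have "{k. k < Suc m \<and> meets I (bs ! k)} = insert m {k. k < m \<and> meets I (bs ! k)}" by auto
      then show ?thesis using True fin by simp
    next
      case False
      then have "{k. k < Suc m \<and> meets I (bs ! k)} = {k. k < m \<and> meets I (bs ! k)}" using less_Suc_eq by auto
      then show ?thesis using False by simp
    qed
    have ih: "card (R_set Phi r alpha I ?u) + card {k. k < m \<and> meets I (bs ! k)} \<le> card (R_set Phi r alpha I w)"
      using Suc.IH m by simp
    show ?case unfolding ps using cnt nk ih by linarith
  qed
  from this[of "length bs"] show ?thesis by simp
qed

lemma s_neg: "j \<in> {1..r} \<Longrightarrow> d \<in> Nn \<Longrightarrow> d \<noteq> - alpha j \<Longrightarrow> refl (alpha j) d \<in> Nn"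
proof -
  assume j: "j \<in> {1..r}" and d: "d \<in> Nn" "d \<noteq> - alpha j"
  have "- d \<in> P" using d(1) neg_iff by simp
  moreover have "- d \<noteq> alpha j" using d(2) minus_equation_iff by metis
  ultimately have "refl (alpha j) (- d) \<in> P" using s_pos[OF j] by blast
  moreover have "refl (alpha j) (- d) = - refl (alpha j) d"
    using refl_linear linear_neg by blast
  ultimately show ?thesis using neg_iff by simp
qed

lemma Inv_step:
  assumes v: "v \<in> W0" and j: "j \<in> {1..r}" and vj: "v (alpha j) \<in> Nn"
  shows "P \<inter> (v \<circ> refl (alpha j)) ` Nn = (P \<inter> v ` Nn) - {- v (alpha j)}"
proof -
  let ?s = "refl (alpha j)"
  have ss: "\<And>x. ?s (?s x) = x" using refl_refl[OF alpha_ne0[OF j]] .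
  have vs: "v \<circ> ?s \<in> W0" using W0_comp[OF v W0_s[OF j]] .
  have ivs: "inv (v \<circ> ?s) = ?s \<circ> inv v"
  proof -
    have "inv ?s = ?s" by (rule inv_unique_comp) (auto simp: fun_eq_iff ss)
    then show ?thesis using o_inv_distrib[OF W0_bij[OF v] W0_bij[OF W0_s[OF j]]] by simp
  qed
  have mem: "c \<in> P \<inter> u ` Nn \<longleftrightarrow> c \<in> P \<and> inv u c \<in> Nn" if u: "u \<in> W0" for u c
    using Inv_Nset[OF u] unfolding Nset_def by blast
  show ?thesis
  proof (intro set_eqI iffI)
    fix c assume "c \<in> P \<inter> (v \<circ> ?s) ` Nn"
    then have c: "c \<in> P" "?s (inv v c) \<in> Nn" using mem[OF vs] ivs by auto
    let ?d = "inv v c"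
    have dPhi: "?d \<in> Phi" using W0_Phi[OF W0_inv[OF v]] c(1) P_sub by blast
    have "?d \<noteq> alpha j"
    proof
      assume "?d = alpha j"
      then have "c = v (alpha j)" using W0_inv_r[OF v, of c] by simp
      then show False using c(1) vj not_both by simp
    qed
    moreover have "?d \<in> Nn"
    proof (rule ccontr)
      assume "?d \<notin> Nn"
      then have "?d \<in> P" using dPhi pos_or_neg by blast
      then have "?s ?d \<in> P" using s_pos[OF j] \<open>?d \<noteq> alpha j\<close> by blast
      then show False using c(2) not_both by blast
    qed
    moreover have "c \<noteq> - v (alpha j)"
    proof
      assume "c = - v (alpha j)"
      then have "?d = - alpha j" using W0_inv_l[OF v] W0_neg[OF v] by (metis)
      then have "?s ?d = alpha j" using s_alpha[OF j] refl_linear linear_neg by (metis minus_minus)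
      then show False using c(2) alpha_P[OF j] not_both by simp
    qed
    ultimately show "c \<in> (P \<inter> v ` Nn) - {- v (alpha j)}" using mem[OF v] c(1) by blast
  next
    fix c assume "c \<in> (P \<inter> v ` Nn) - {- v (alpha j)}"
    then have c: "c \<in> P" "inv v c \<in> Nn" "c \<noteq> - v (alpha j)" using mem[OF v] by auto
    have "inv v c \<noteq> - alpha j"
    proof
      assume "inv v c = - alpha j"
      then have "c = v (- alpha j)" using W0_inv_r[OF v, of c] by simp
      then show False using c(3) W0_neg[OF v] by simp
    qed
    then have "?s (inv v c) \<in> Nn" using s_neg[OF j c(2)] by blast
    then have "inv (v \<circ> ?s) c \<in> Nn" using ivs by simp
    then show "c \<in> P \<inter> (v \<circ> ?s) ` Nn" using mem[OF vs, of c] c(1) by blast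
  qed
qed

lemma antired:
  "v \<in> W0 \<Longrightarrow> \<exists>bs. sorting_process Phi r alpha v bs \<and> antireduced r alpha v bs \<and> distinct bs \<and>
      set bs = P \<inter> v ` Nn"
proof (induction "card (Nset v)" arbitrary: v)
  case 0
  then have "Nset v = {}" using Nset_fin by simp
  then have vid: "v = id" using N_empty_id 0 by blast
  have w0: "wlen r alpha id = 0" using wlen_N[OF W0_id] \<open>Nset v = {}\<close> vid by simp
  have "P \<inter> id ` Nn = {}" using not_both by auto
  moreover have "sorting_process Phi r alpha id []"
    unfolding sorting_process_def using w0 by (simp add: refl_prod_Nil partial_w_0)
  moreover have "antireduced r alpha id []" unfolding antireduced_def by simp
  moreover have "set [] = P \<inter> id ` Nn" using calculation(1) by simp
  moreover have "distinct []" by simp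
  ultimately show ?case unfolding vid by blast
next
  case (Suc n v)
  have v: "v \<in> W0" by fact
  then have "Nset v \<noteq> {}" using Suc.hyps(2) by auto
  then obtain j where j: "j \<in> {1..r}" "v (alpha j) \<in> Nn" using simple_in_N v by blast
  let ?s = "refl (alpha j)"
  let ?v' = "v \<circ> ?s"
  let ?b = "- v (alpha j)"
  have ss: "\<And>x. ?s (?s x) = x" using refl_refl[OF alpha_ne0[OF j(1)]] .
  have v': "?v' \<in> W0" using W0_comp[OF v W0_s[OF j(1)]] .
  have cn: "card (Nset ?v') = n" using N_step(1)[OF v j(1)] j(2) Suc.hyps(2) by simp
  obtain bs' where bs': "sorting_process Phi r alpha ?v' bs'" "antireduced r alpha ?v' bs'" "distinct bs'"
    "set bs' = P \<inter> ?v' ` Nn" using Suc.hyps(1)[OF cn[symmetric] v'] by blast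
  have bP: "?b \<in> P" using j(2) neg_iff by simp
  have b0: "?b \<noteq> 0" using bP P_sub zero by auto
  have bv: "?b = v (- alpha j)" using W0_neg[OF v] by simp
  have rb: "refl ?b = refl (v (alpha j))" by (rule refl_neg)
  have conj: "refl (v (alpha j)) \<circ> v = v \<circ> ?s" using conj_refl'[OF W0_orth[OF v]] .
  have v'eq: "?v' = refl ?b \<circ> v" using conj rb by simp
  have veq: "v = refl ?b \<circ> ?v'" using v'eq refl_refl[OF b0] by (simp add: fun_eq_iff)
  have wv: "wlen r alpha v = Suc n" using wlen_N[OF v] Suc.hyps(2) by simp
  have wv': "wlen r alpha ?v' = n" using wlen_N[OF v'] cn by simp
  have sp': "length bs' = n" "set bs' \<subseteq> P" "?v' = refl_prod bs'"
    "\<forall>i\<le>length bs'. wlen r alpha (partial_w bs' ?v' i) = length bs' - i"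
    using bs'(1) wv' unfolding sorting_process_def by auto
  let ?bs = "?b # bs'"
  have pw: "partial_w ?bs v (Suc k) = partial_w bs' ?v' k" for k
  proof -
    have "rev (take (Suc k) ?bs) = rev (take k bs') @ [?b]" by simp
    then have "partial_w ?bs v (Suc k) = refl_prod (rev (take k bs')) \<circ> refl ?b \<circ> v"
      unfolding partial_w_def by (simp add: refl_prod_append refl_prod_Cons refl_prod_Nil o_assoc)
    then show ?thesis unfolding partial_w_def using v'eq by (simp add: o_assoc)
  qed
  have sp: "sorting_process Phi r alpha v ?bs"
    unfolding sorting_process_def
  proof (intro conjI allI impI)
    show "length ?bs = wlen r alpha v" using sp'(1) wv by simp
    show "set ?bs \<subseteq> P" using sp'(2) bP by simp
    show "v = refl_prod ?bs" using veq sp'(3) by (simp add: refl_prod_Cons)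
    fix i assume i: "i \<le> length ?bs"
    show "wlen r alpha (partial_w ?bs v i) = length ?bs - i"
    proof (cases i)
      case 0 then show ?thesis using wv sp'(1) by (simp add: partial_w_0)
    next
      case (Suc k) then show ?thesis using pw sp'(4) i by simp
    qed
  qed
  have ar: "antireduced r alpha v ?bs"
    unfolding antireduced_def
  proof (intro allI impI)
    fix k assume k: "k < length ?bs"
    show "inv (partial_w ?bs v k) (?bs ! k) \<in> uminus ` alpha ` {1..r}"
    proof (cases k)
      case 0
      have "inv v ?b = - alpha j" using bv W0_inv_l[OF v] by simp
      then show ?thesis using 0 j(1) by (simp add: partial_w_0)
    next
      case (Suc k')
      then show ?thesis using pw bs'(2) k unfolding antireduced_def by simp
    qed
  qed
  have st: "set bs' = (P \<inter> v ` Nn) - {?b}" using bs'(4) Inv_step[OF v j] by simp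
  have bin: "?b \<in> P \<inter> v ` Nn" using bP bv j(1) alpha_P neg_iff by auto
  have "set ?bs = P \<inter> v ` Nn" using st bin by auto
  moreover have "distinct ?bs" using st bs'(3) by simp
  ultimately show ?case using sp ar by blast
qed

lemma hall:
  fixes S :: "'b set" and A :: "'b \<Rightarrow> nat set" and n :: "nat \<Rightarrow> nat" and L :: "nat set"
  assumes "finite S" "finite L" "\<forall>s\<in>S. A s \<subseteq> L" "(\<Sum>i\<in>L. n i) = card S"
    "\<forall>I\<subseteq>L. (\<Sum>i\<in>I. n i) \<le> card {s\<in>S. A s \<inter> I \<noteq> {}}"
  shows "\<exists>f. (\<forall>s\<in>S. f s \<in> A s) \<and> (\<forall>i\<in>L. card {s\<in>S. f s = i} = n i)"
  using assms
proof (induction "card S" arbitrary: S L A n rule: less_induct)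
  case less
  note fS = less.prems(1) and fL = less.prems(2) and AL = less.prems(3) and tot = less.prems(4)
    and H = less.prems(5)
  show ?case
  proof (cases "S = {}")
    case True
    then have "\<forall>i\<in>L. n i = 0" using tot fL by simp
    then show ?thesis using True by (intro exI[of _ "\<lambda>_. 0"]) simp
  next
    case Sne: False
    have cSpos: "card S > 0" using Sne fS by (simp add: card_gt_0_iff)
    show ?thesis
    proof (cases "\<exists>I\<subseteq>L. 0 < (\<Sum>i\<in>I. n i) \<and> (\<Sum>i\<in>I. n i) < card S \<and>
                        (\<Sum>i\<in>I. n i) = card {s\<in>S. A s \<inter> I \<noteq> {}}")
      case True
      then obtain I where I: "I \<subseteq> L" "0 < (\<Sum>i\<in>I. n i)" "(\<Sum>i\<in>I. n i) < card S"
        "(\<Sum>i\<in>I. n i) = card {s\<in>S. A s \<inter> I \<noteq> {}}" by blast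
      define S1 where "S1 = {s\<in>S. A s \<inter> I \<noteq> {}}"
      define S2 where "S2 = S - S1"
      have S1S: "S1 \<subseteq> S" unfolding S1_def by auto
      have fS1: "finite S1" using finite_subset[OF S1S fS] .
      have fS2: "finite S2" using fS unfolding S2_def by simp
      have cS1: "card S1 = (\<Sum>i\<in>I. n i)" using I(4) unfolding S1_def by simp
      have cS2: "card S2 = card S - card S1" unfolding S2_def using card_Diff_subset[OF fS1 S1S] .
      have fI: "finite I" using finite_subset[OF I(1) fL] .
      have A2: "\<forall>s\<in>S2. A s \<subseteq> L - I" using AL unfolding S2_def S1_def by blast
      have "\<exists>f1. (\<forall>s\<in>S1. f1 s \<in> A s \<inter> I) \<and> (\<forall>i\<in>I. card {s\<in>S1. f1 s = i} = n i)"
      proof (rule less.hyps)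
        show "card S1 < card S" using cS1 I(3) by simp
        show "finite S1" by fact
        show "finite I" by fact
        show "\<forall>s\<in>S1. A s \<inter> I \<subseteq> I" by blast
        show "(\<Sum>i\<in>I. n i) = card S1" using cS1 by simp
        show "\<forall>K\<subseteq>I. (\<Sum>i\<in>K. n i) \<le> card {s\<in>S1. A s \<inter> I \<inter> K \<noteq> {}}"
        proof (intro allI impI)
          fix K assume K: "K \<subseteq> I"
          have e: "{s\<in>S1. A s \<inter> I \<inter> K \<noteq> {}} = {s\<in>S. A s \<inter> K \<noteq> {}}" unfolding S1_def using K by blast
          have "K \<subseteq> L" using K I(1) by blast
          then show "(\<Sum>i\<in>K. n i) \<le> card {s\<in>S1. A s \<inter> I \<inter> K \<noteq> {}}" unfolding e using H by blast
        qed
      qed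
      then obtain f1 where f1: "\<forall>s\<in>S1. f1 s \<in> A s \<inter> I" "\<forall>i\<in>I. card {s\<in>S1. f1 s = i} = n i" by blast
      have "\<exists>f2. (\<forall>s\<in>S2. f2 s \<in> A s) \<and> (\<forall>i\<in>L - I. card {s\<in>S2. f2 s = i} = n i)"
      proof (rule less.hyps)
        show "card S2 < card S" using cS2 cS1 I(2) cSpos by simp
        show "finite S2" by fact
        show "finite (L - I)" using fL by simp
        show "\<forall>s\<in>S2. A s \<subseteq> L - I" by fact
        have "(\<Sum>i\<in>L. n i) = (\<Sum>i\<in>L - I. n i) + (\<Sum>i\<in>I. n i)"
          using sum.subset_diff[OF I(1) fL] .
        then show "(\<Sum>i\<in>L - I. n i) = card S2" using tot cS1 cS2 by simp
        show "\<forall>K\<subseteq>L - I. (\<Sum>i\<in>K. n i) \<le> card {s\<in>S2. A s \<inter> K \<noteq> {}}"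
        proof (intro allI impI)
          fix K assume K: "K \<subseteq> L - I"
          have fK: "finite K" using finite_subset[OF K] fL by simp
          have dj: "K \<inter> I = {}" using K by blast
          have s1: "(\<Sum>i\<in>K \<union> I. n i) = (\<Sum>i\<in>K. n i) + (\<Sum>i\<in>I. n i)"
            using sum.union_disjoint[OF fK fI dj] .
          have e: "{s\<in>S. A s \<inter> (K \<union> I) \<noteq> {}} = {s\<in>S2. A s \<inter> K \<noteq> {}} \<union> S1"
            unfolding S1_def S2_def by blast
          have dj2: "{s\<in>S2. A s \<inter> K \<noteq> {}} \<inter> S1 = {}" unfolding S2_def by blast
          have c: "card {s\<in>S. A s \<inter> (K \<union> I) \<noteq> {}} = card {s\<in>S2. A s \<inter> K \<noteq> {}} + card S1"
            unfolding e using card_Un_disjoint[OF _ fS1 dj2] fS2 by simp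
          have "K \<union> I \<subseteq> L" using K I(1) by blast
          then have "(\<Sum>i\<in>K \<union> I. n i) \<le> card {s\<in>S. A s \<inter> (K \<union> I) \<noteq> {}}" using H by blast
          then show "(\<Sum>i\<in>K. n i) \<le> card {s\<in>S2. A s \<inter> K \<noteq> {}}" using s1 c cS1 by linarith
        qed
      qed
      then obtain f2 where f2: "\<forall>s\<in>S2. f2 s \<in> A s" "\<forall>i\<in>L - I. card {s\<in>S2. f2 s = i} = n i" by blast
      let ?f = "\<lambda>s. if s \<in> S1 then f1 s else f2 s"
      show ?thesis
      proof (intro exI[of _ ?f] conjI ballI)
        fix s assume s: "s \<in> S"
        show "?f s \<in> A s"
        proof (cases "s \<in> S1")
          case True then show ?thesis using f1(1) by auto
        next
          case False then have "s \<in> S2" unfolding S2_def using s by blast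
          then show ?thesis using f2(1) False by auto
        qed
      next
        fix i assume i: "i \<in> L"
        show "card {s\<in>S. ?f s = i} = n i"
        proof (cases "i \<in> I")
          case True
          have "{s\<in>S. ?f s = i} = {s\<in>S1. f1 s = i}"
          proof (intro set_eqI iffI)
            fix s assume s: "s \<in> {s\<in>S. ?f s = i}"
            show "s \<in> {s\<in>S1. f1 s = i}"
            proof (cases "s \<in> S1")
              case False
              then have "s \<in> S2" unfolding S2_def using s by blast
              then have "f2 s \<in> L - I" using f2(1) A2 by blast
              then show ?thesis using s False True by auto
            qed (use s in auto)
          qed (use S1S in auto)
          then show ?thesis using f1(2) True by simp
        next
          case False
          have "{s\<in>S. ?f s = i} = {s\<in>S2. f2 s = i}"
          proof (intro set_eqI iffI)
            fix s assume s: "s \<in> {s\<in>S. ?f s = i}"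
            show "s \<in> {s\<in>S2. f2 s = i}"
            proof (cases "s \<in> S1")
              case True
              then have "f1 s \<in> I" using f1(1) by blast
              then show ?thesis using s True False by auto
            qed (use s in \<open>auto simp: S2_def\<close>)
          qed (auto simp: S2_def)
          then show ?thesis using f2(2) False i by simp
        qed
      qed
    next
      case noc: False
      have "\<exists>i\<in>L. n i > 0"
      proof (rule ccontr)
        assume "\<not> ?thesis"
        then have "(\<Sum>i\<in>L. n i) = 0" by simp
        then show False using tot cSpos by simp
      qed
      then obtain i where i: "i \<in> L" "n i > 0" by blast
      have "{i} \<subseteq> L" using i by blast
      then have "n i \<le> card {s\<in>S. A s \<inter> {i} \<noteq> {}}" using H[rule_format, of "{i}"] by simp
      then have "card {s\<in>S. A s \<inter> {i} \<noteq> {}} > 0" using i(2) by linarith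
      then have "{s\<in>S. A s \<inter> {i} \<noteq> {}} \<noteq> {}" using card_gt_0_iff by blast
      then obtain s where s: "s \<in> S" "i \<in> A s" by blast
      define S' where "S' = S - {s}"
      define n' where "n' = n(i := n i - 1)"
      have cS': "card S' = card S - 1" unfolding S'_def using s(1) fS by simp
      have sumL: "(\<Sum>k\<in>L. n k) = n i + (\<Sum>k\<in>L - {i}. n k)" using sum.remove[OF fL i(1)] .
      have sumL': "(\<Sum>k\<in>L. n' k) = n' i + (\<Sum>k\<in>L - {i}. n' k)" using sum.remove[OF fL i(1)] .
      have eqr: "(\<Sum>k\<in>X - {i}. n' k) = (\<Sum>k\<in>X - {i}. n k)" for X
        unfolding n'_def by (rule sum.cong) auto
      have "\<exists>f'. (\<forall>t\<in>S'. f' t \<in> A t) \<and> (\<forall>k\<in>L. card {t\<in>S'. f' t = k} = n' k)"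
      proof (rule less.hyps)
        show "card S' < card S" using cS' cSpos by simp
        show "finite S'" using fS unfolding S'_def by simp
        show "finite L" by fact
        show "\<forall>t\<in>S'. A t \<subseteq> L" using AL unfolding S'_def by blast
        show "(\<Sum>k\<in>L. n' k) = card S'" using sumL sumL' eqr[of L] tot cS' i(2) unfolding n'_def by simp
        show "\<forall>I\<subseteq>L. (\<Sum>k\<in>I. n' k) \<le> card {t\<in>S'. A t \<inter> I \<noteq> {}}"
        proof (intro allI impI)
          fix I assume I: "I \<subseteq> L"
          have fI: "finite I" using finite_subset[OF I fL] .
          let ?NI = "{t\<in>S. A t \<inter> I \<noteq> {}}"
          have fNI: "finite ?NI" using fS by simp
          have eN: "{t\<in>S'. A t \<inter> I \<noteq> {}} = ?NI - {s}" unfolding S'_def by blast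
          have cN: "card ?NI - 1 \<le> card {t\<in>S'. A t \<inter> I \<noteq> {}}"
            unfolding eN using card_Diff_singleton_if[of ?NI s] by auto
          have HI: "(\<Sum>k\<in>I. n k) \<le> card ?NI" using H I by blast
          show "(\<Sum>k\<in>I. n' k) \<le> card {t\<in>S'. A t \<inter> I \<noteq> {}}"
          proof (cases "i \<in> I")
            case True
            have "(\<Sum>k\<in>I. n' k) = n' i + (\<Sum>k\<in>I - {i}. n' k)" using sum.remove[OF fI True] .
            moreover have "(\<Sum>k\<in>I. n k) = n i + (\<Sum>k\<in>I - {i}. n k)" using sum.remove[OF fI True] .
            ultimately have "(\<Sum>k\<in>I. n' k) = (\<Sum>k\<in>I. n k) - 1" using eqr[of I] i(2) unfolding n'_def by simp
            then show ?thesis using HI cN by linarith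
          next
            case False
            have e: "(\<Sum>k\<in>I. n' k) = (\<Sum>k\<in>I. n k)" unfolding n'_def using False by (intro sum.cong) auto
            show ?thesis
            proof (cases "(\<Sum>k\<in>I. n k) = 0")
              case True then show ?thesis using e by simp
            next
              case nz: False
              have "(\<Sum>k\<in>L. n k) = (\<Sum>k\<in>L - I. n k) + (\<Sum>k\<in>I. n k)" using sum.subset_diff[OF I fL] .
              moreover have "n i \<le> (\<Sum>k\<in>L - I. n k)"
                using member_le_sum[of i "L - I" n] fL i(1) False by simp
              ultimately have "(\<Sum>k\<in>I. n k) < card S" using tot i(2) by linarith
              then have "(\<Sum>k\<in>I. n k) \<noteq> card ?NI" using noc I nz by blast
              then have "(\<Sum>k\<in>I. n k) < card ?NI" using HI by simp
              then show ?thesis using e cN by linarith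
            qed
          qed
        qed
      qed
      then obtain f' where f': "\<forall>t\<in>S'. f' t \<in> A t" "\<forall>k\<in>L. card {t\<in>S'. f' t = k} = n' k" by blast
      let ?f = "f'(s := i)"
      show ?thesis
      proof (intro exI[of _ ?f] conjI ballI)
        fix t assume "t \<in> S" then show "?f t \<in> A t" using f' s unfolding S'_def by auto
      next
        fix k assume k: "k \<in> L"
        have fS': "finite {t\<in>S'. f' t = k}" using fS unfolding S'_def by simp
        show "card {t\<in>S. ?f t = k} = n k"
        proof (cases "k = i")
          case True
          have "{t\<in>S. ?f t = k} = insert s {t\<in>S'. f' t = k}" using s True unfolding S'_def by auto
          moreover have "s \<notin> {t\<in>S'. f' t = k}" unfolding S'_def by simp
          ultimately have "card {t\<in>S. ?f t = k} = Suc (card {t\<in>S'. f' t = k})" using fS' by simp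
          then show ?thesis using f'(2) k True i(2) unfolding n'_def by simp
        next
          case False
          have "{t\<in>S. ?f t = k} = {t\<in>S'. f' t = k}" using s False unfolding S'_def by auto
          then show ?thesis using f'(2) k False unfolding n'_def by simp
        qed
      qed
    qed
  qed
qed

end

lemma sum_label_mult: "finite I \<Longrightarrow> (\<Sum>i\<in>I. label_mult ls i) = length (filter (\<lambda>x. x \<in> I) ls)"
proof (induction ls)
  case Nil then show ?case by (simp add: label_mult_def)
next
  case (Cons x ls)
  have "(\<Sum>i\<in>I. label_mult (x # ls) i) = (\<Sum>i\<in>I. (if x = i then 1 else 0) + label_mult ls i)"
    by (rule sum.cong) (auto simp: label_mult_def)
  also have "\<dots> = (\<Sum>i\<in>I. (if x = i then 1 else 0)) + (\<Sum>i\<in>I. label_mult ls i)"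
    by (rule sum.distrib)
  also have "(\<Sum>i\<in>I. (if x = i then 1 else 0)) = (if x \<in> I then 1 else (0::nat))"
    using Cons.prems by (simp add: sum.delta)
  finally show ?case using Cons by simp
qed

theorem mainTheorem13:
  fixes Phi :: "'a::euclidean_space set" and r :: nat and alpha :: "nat \<Rightarrow> 'a"
    and w :: "'a \<Rightarrow> 'a" and n :: "nat \<Rightarrow> nat"
  assumes "simply_laced_root_system Phi r alpha"
    and "w \<in> weyl_group Phi"
    and "(\<Sum>j=1..r. n j) = wlen r alpha w"
  shows "((\<exists>bs ls. labeled_sorting_process Phi r alpha w bs ls \<and>
                   (\<forall>j\<in>{1..r}. label_mult ls j = n j))
          \<longleftrightarrow> (\<forall>I\<subseteq>{1..r}. (\<Sum>i\<in>I. n i) \<le> card (R_set Phi r alpha I w)))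
       \<and> ((\<forall>I\<subseteq>{1..r}. (\<Sum>i\<in>I. n i) \<le> card (R_set Phi r alpha I w)) \<longrightarrow>
          (\<exists>bs ls. labeled_sorting_process Phi r alpha w bs ls \<and>
                   (\<forall>j\<in>{1..r}. label_mult ls j = n j) \<and>
                   antireduced r alpha w bs))"
proof -
  interpret RS Phi r alpha by (rule RS.intro[OF assms(1)])
  have w: "w \<in> W0" using weyl_W0[OF assms(2)] .
  let ?H = "\<forall>I\<subseteq>{1..r}. (\<Sum>i\<in>I. n i) \<le> card (R_set Phi r alpha I w)"
  have nec: "?H" if lsp: "labeled_sorting_process Phi r alpha w bs ls"
    and lm: "\<forall>j\<in>{1..r}. label_mult ls j = n j" for bs ls
  proof (intro allI impI)
    fix I assume I: "I \<subseteq> {1..r}"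
    have sp: "sorting_process Phi r alpha w bs" and len: "length ls = length bs"
      and lab: "\<forall>k<length bs. ls ! k \<in> supp r alpha (bs ! k)"
      using lsp unfolding labeled_sorting_process_def by auto
    have fI: "finite I" using finite_subset[OF I] by simp
    have "(\<Sum>i\<in>I. n i) = (\<Sum>i\<in>I. label_mult ls i)" using lm I by (intro sum.cong) auto
    also have "\<dots> = length (filter (\<lambda>x. x \<in> I) ls)" using sum_label_mult[OF fI] .
    also have "\<dots> = card {k. k < length ls \<and> ls ! k \<in> I}" by (rule length_filter_conv_card)
    also have "\<dots> \<le> card {k. k < length bs \<and> meets I (bs ! k)}"
    proof (rule card_mono)
      show "finite {k. k < length bs \<and> meets I (bs ! k)}" by simp
      show "{k. k < length ls \<and> ls ! k \<in> I} \<subseteq> {k. k < length bs \<and> meets I (bs ! k)}"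
        using lab len unfolding meets_def by auto
    qed
    also have "\<dots> \<le> card (R_set Phi r alpha I w)" using nec_count[OF w sp I] .
    finally show "(\<Sum>i\<in>I. n i) \<le> card (R_set Phi r alpha I w)" .
  qed
  have suf: "\<exists>bs ls. labeled_sorting_process Phi r alpha w bs ls \<and>
                   (\<forall>j\<in>{1..r}. label_mult ls j = n j) \<and> antireduced r alpha w bs" if H: ?H
  proof -
    obtain bs where bs: "sorting_process Phi r alpha w bs" "antireduced r alpha w bs" "distinct bs"
      "set bs = P \<inter> w ` Nn" using antired[OF w] by blast
    have RS: "{s \<in> set bs. supp r alpha s \<inter> I \<noteq> {}} = R_set Phi r alpha I w" for I
      unfolding R_def2 meets_def bs(4) by blast
    have "\<exists>f. (\<forall>s\<in>set bs. f s \<in> supp r alpha s) \<and> (\<forall>i\<in>{1..r}. card {s\<in>set bs. f s = i} = n i)"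
    proof (rule hall)
      show "finite (set bs)" by simp
      show "finite {1..r}" by simp
      show "\<forall>s\<in>set bs. supp r alpha s \<subseteq> {1..r}" unfolding supp_def by blast
      show "(\<Sum>i\<in>{1..r}. n i) = card (set bs)" using assms(3) Inv_card[OF w] bs(4) by simp
      show "\<forall>I\<subseteq>{1..r}. (\<Sum>i\<in>I. n i) \<le> card {s\<in>set bs. supp r alpha s \<inter> I \<noteq> {}}"
        using H RS by simp
    qed
    then obtain f where f: "\<forall>s\<in>set bs. f s \<in> supp r alpha s" "\<forall>i\<in>{1..r}. card {s\<in>set bs. f s = i} = n i"
      by blast
    let ?ls = "map f bs"
    have "labeled_sorting_process Phi r alpha w bs ?ls"
      unfolding labeled_sorting_process_def using bs(1) f(1) by auto
    moreover have "\<forall>j\<in>{1..r}. label_mult ?ls j = n j"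
    proof
      fix j assume j: "j \<in> {1..r}"
      have "label_mult ?ls j = length (filter (\<lambda>s. f s = j) bs)"
        unfolding label_mult_def by (simp add: filter_map comp_def)
      also have "\<dots> = card ({s. f s = j} \<inter> set bs)" using distinct_length_filter[OF bs(3)] .
      also have "\<dots> = card {s\<in>set bs. f s = j}" by (rule arg_cong[where f = card]) blast
      finally show "label_mult ?ls j = n j" using f(2) j by simp
    qed
    ultimately show ?thesis using bs(2) by blast
  qed
  show ?thesis using nec suf by blast
qed

end
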